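(* Let $q\geq 3$ be an odd prime power and $m\geq 2$ an integer with $q^m\geq 25$. Then the third largest odd coset leader modulo $q^m-1$ is $$\delta_3=\begin{cases}(q-1)q^{m-1}-q^{\lceil\frac{2m-1}{3}\rceil}-q^{\lfloor\frac{m}{3}-1\rfloor}-1 & \text{if } 3\nmid(m+1),\\ (q-1)q^{m-1}-q^{\frac{2m-1}{3}}-q^{\frac{m+1}{3}}-1 & \text{if } 3\mid(m+1).\end{cases}$$ Moreover, $|C_{\delta_3}^{(q,q^m-1)}|=m$.
   Context: $C_i^{(q,N)}=\{i,iq,iq^2,\ldots\}\bmod N$ denotes the $q$-cyclotomic coset of $i$ modulo $N$; its smallest element is its coset leader. An odd coset leader modulo $N$ is a coset leader that is an odd integer. *)

theory Defs
  imports "HOL-Computational_Algebra.Primes"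
begin

definition cyc_coset :: "nat \<Rightarrow> nat \<Rightarrow> nat \<Rightarrow> nat set" where
  "cyc_coset q N i = {(i * q ^ j) mod N | j. True}"

definition is_coset_leader :: "nat \<Rightarrow> nat \<Rightarrow> nat \<Rightarrow> bool" where
  "is_coset_leader q N i \<longleftrightarrow> i < N \<and> i = Min (cyc_coset q N i)"

definition odd_coset_leaders :: "nat \<Rightarrow> nat \<Rightarrow> nat set" where
  "odd_coset_leaders q N = {i. is_coset_leader q N i \<and> odd i}"

definition kth_largest :: "nat \<Rightarrow> nat set \<Rightarrow> nat" where
  "kth_largest k A = rev (sorted_list_of_set A) ! (k - 1)"

end

theory Submission
  imports Defs "HOL-Number_Theory.Cong"
begin

definition pw :: "nat \<Rightarrow> nat set \<Rightarrow> nat" where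
  "pw q A = (\<Sum>i\<in>A. q ^ i)"

definition rotset :: "nat \<Rightarrow> nat \<Rightarrow> nat set \<Rightarrow> nat set" where
  "rotset m j A = (\<lambda>i. (i + j) mod m) ` A"

lemma pw_empty[simp]: "pw q {} = 0" by (simp add: pw_def)

lemma pw_insert: "finite A \<Longrightarrow> e \<notin> A \<Longrightarrow> pw q (insert e A) = q ^ e + pw q A"
  by (simp add: pw_def)

lemma pw_mono: "finite B \<Longrightarrow> A \<subseteq> B \<Longrightarrow> pw q A \<le> pw q B"
  unfolding pw_def by (rule sum_mono2) auto

lemma pw_bound: assumes "q \<ge> 3" shows "A \<subseteq> {..<e} \<Longrightarrow> 2 * pw q A + 1 \<le> q ^ e"
proof (induction e arbitrary: A)
  case 0 then show ?case by simp
next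
  case (Suc e)
  have fin: "finite (A - {e})" using Suc.prems finite_subset by blast
  have "A - {e} \<subseteq> {..<e}" using Suc.prems by auto
  then have IH: "2 * pw q (A - {e}) + 1 \<le> q ^ e" using Suc.IH by blast
  have "pw q A \<le> q ^ e + pw q (A - {e})"
  proof (cases "e \<in> A")
    case True
    then have "A = insert e (A - {e})" by auto
    then show ?thesis using pw_insert[OF fin, of e q] by (metis Diff_iff insertI1 order.refl)
  next
    case False then show ?thesis by simp
  qed
  then have "2 * pw q A + 1 \<le> 3 * q ^ e" using IH by linarith
  also have "\<dots> \<le> q ^ Suc e" using assms by simp
  finally show ?case .
qed

lemma pw_lt: assumes "q \<ge> 3" "A \<subseteq> {..<e}" shows "pw q A < q ^ e"
  using pw_bound[OF assms] by linarith

lemma pw_ltN: assumes "q \<ge> 3" "A \<subseteq> {..<m}" "m \<ge> 1" shows "pw q A < q ^ m - 1"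
proof -
  have a: "2 * pw q A + 1 \<le> q ^ m" using pw_bound[OF assms(1,2)] .
  have "q ^ 1 \<le> q ^ m" using assms by (intro power_increasing) auto
  then have "q ^ m \<ge> 3" using assms by simp
  then show ?thesis using a by linarith
qed

lemma pw_parity: assumes "odd q" "finite A" shows "odd (pw q A) \<longleftrightarrow> odd (card A)"
  using assms(2)
proof (induction A rule: finite_induct)
  case empty then show ?case by simp
next
  case (insert x F)
  then show ?case using assms(1) by (simp add: pw_insert)
qed

lemma pw_elem: "finite A \<Longrightarrow> e \<in> A \<Longrightarrow> q ^ e \<le> pw q A"
  unfolding pw_def by (rule member_le_sum) auto


lemma qm1_cong: fixes q m :: nat assumes "q \<ge> 1" shows "[q ^ m = 1] (mod (q ^ m - 1))"
proof -
  have "q ^ m \<ge> 1" using assms by (rule one_le_power)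
  then have e: "q ^ m = (q ^ m - 1) + 1" by simp
  have "(q ^ m - 1 + 1) mod (q ^ m - 1) = 1 mod (q ^ m - 1)" by (rule mod_add_self1)
  then show ?thesis unfolding cong_def using e by simp
qed

lemma qm_cong: fixes q m k :: nat assumes "q \<ge> 1" shows "[q ^ k = q ^ (k mod m)] (mod (q ^ m - 1))"
proof -
  have "q ^ k = q ^ (m * (k div m) + k mod m)" by simp
  also have "\<dots> = (q ^ m) ^ (k div m) * q ^ (k mod m)" by (simp only: power_add power_mult)
  finally have 1: "q ^ k = (q ^ m) ^ (k div m) * q ^ (k mod m)" .
  have 2: "[(q ^ m) ^ (k div m) * q ^ (k mod m) = 1 ^ (k div m) * q ^ (k mod m)] (mod (q ^ m - 1))"
    by (intro cong_mult cong_pow qm1_cong[OF assms] cong_refl)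
  show ?thesis using 2 unfolding 1[symmetric] by simp
qed


lemma rot_inj: fixes A :: "nat set" assumes "A \<subseteq> {..<m}" shows "inj_on (\<lambda>i. (i + j) mod m) A"
proof
  fix x y assume xy: "x \<in> A" "y \<in> A" "(x + j) mod m = (y + j) mod m"
  then have "[x + j = y + j] (mod m)" by (simp add: cong_def)
  then have "[x = y] (mod m)" by (simp add: cong_add_rcancel_nat)
  moreover have "x < m" "y < m" using xy assms by auto
  ultimately show "x = y" by (simp add: cong_def)
qed

lemma rotset_sub: "m \<ge> 1 \<Longrightarrow> rotset m j A \<subseteq> {..<m}"
  unfolding rotset_def by auto

lemma rot_pw: fixes q m j :: nat
  assumes q3: "q \<ge> 3" and m1: "m \<ge> 1" and A: "A \<subseteq> {..<m}"
  shows "pw q A * q ^ j mod (q ^ m - 1) = pw q (rotset m j A)"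
proof -
  have fin: "finite A" using A finite_subset by blast
  have "pw q A * q ^ j = (\<Sum>i\<in>A. q ^ (i + j))"
    unfolding pw_def by (simp add: sum_distrib_right power_add)
  moreover have "[(\<Sum>i\<in>A. q ^ (i + j)) = (\<Sum>i\<in>A. q ^ ((i + j) mod m))] (mod (q ^ m - 1))"
    using q3 by (intro cong_sum qm_cong) auto
  moreover have "(\<Sum>i\<in>A. q ^ ((i + j) mod m)) = pw q (rotset m j A)"
    unfolding pw_def rotset_def by (simp add: sum.reindex[OF rot_inj[OF A]])
  moreover have "pw q (rotset m j A) < q ^ m - 1"
    using pw_ltN[OF q3 rotset_sub[OF m1] m1] .
  ultimately show ?thesis by (simp add: cong_def)
qed

lemma aux_id: fixes P Q :: nat assumes "P \<ge> 1" "Q \<ge> 1" shows "(P - 1) + (Q - 1) * P = Q * P - 1"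
proof -
  obtain P' Q' where "P = Suc P'" "Q = Suc Q'" using assms by (metis Suc_le_D One_nat_def)
  then show ?thesis by simp
qed

lemma rot_formula: fixes q m y j :: nat
  assumes q2: "q \<ge> 2" and y: "y < q ^ m - 1" and j: "j \<le> m"
  shows "y * q ^ j mod (q ^ m - 1) = (y mod q ^ (m - j)) * q ^ j + y div q ^ (m - j)"
proof -
  define a where "a = y div q ^ (m - j)"
  define b where "b = y mod q ^ (m - j)"
  have qm: "q ^ m = q ^ (m - j) * q ^ j" using j by (simp add: power_add[symmetric])
  have yab: "y = a * q ^ (m - j) + b" unfolding a_def b_def using div_mult_mod_eq[of y "q^(m-j)"] by simp
  have pos1: "q ^ (m - j) > 0" "q ^ j > 0" using q2 by auto
  have idq: "(q ^ j - 1) + (q ^ (m - j) - 1) * q ^ j = q ^ (m - j) * q ^ j - 1"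
    by (rule aux_id) (use pos1 in auto)
  have b_lt: "b < q ^ (m - j)" unfolding b_def using pos1 by simp
  have a_lt: "a < q ^ j"
  proof -
    have "y < q ^ (m - j) * q ^ j" using y qm by simp
    then show ?thesis unfolding a_def using pos1 by (simp add: div_less_iff_less_mult mult.commute)
  qed
  have "y * q ^ j = a * q ^ m + b * q ^ j" using yab qm by (simp add: algebra_simps)
  also have "\<dots> = a * (q ^ m - 1) + (a + b * q ^ j)"
  proof -
    have "q ^ m \<ge> 1" using q2 by simp
    then have "a \<le> a * q ^ m" by simp
    moreover have "a * (q ^ m - 1) = a * q ^ m - a" by (simp add: diff_mult_distrib2)
    ultimately show ?thesis by linarith
  qed
  finally have eq: "y * q ^ j = a * (q ^ m - 1) + (a + b * q ^ j)" .
  have le: "a + b * q ^ j < q ^ m - 1"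
  proof -
    have "a \<le> q ^ j - 1" "b \<le> q ^ (m - j) - 1" using a_lt b_lt by auto
    have "a + b * q ^ j \<le> q ^ m - 1"
    proof -
      have "b * q ^ j \<le> (q ^ (m - j) - 1) * q ^ j" using \<open>b \<le> _\<close> by simp
      then have "a + b * q ^ j \<le> (q ^ j - 1) + (q ^ (m - j) - 1) * q ^ j" using \<open>a \<le> _\<close> by linarith
      also have "\<dots> = q ^ m - 1" using idq qm by metis
      finally show ?thesis .
    qed
    moreover have "a + b * q ^ j \<noteq> q ^ m - 1"
    proof
      assume h: "a + b * q ^ j = q ^ m - 1"
      have "a = q ^ j - 1 \<and> b = q ^ (m - j) - 1"
      proof (rule ccontr)
        assume "\<not> ?thesis"
        then have "a < q ^ j - 1 \<or> b < q ^ (m - j) - 1" using \<open>a \<le> _\<close> \<open>b \<le> _\<close> by linarith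
        then show False
        proof
          assume "a < q ^ j - 1"
          have "b * q ^ j \<le> (q ^ (m - j) - 1) * q ^ j" using \<open>b \<le> _\<close> by simp
          then have "a + b * q ^ j < (q ^ j - 1) + (q ^ (m - j) - 1) * q ^ j" using \<open>a < q ^ j - 1\<close> by linarith
          also have "\<dots> = q ^ m - 1" using idq qm by metis
          finally show False using h by simp
        next
          assume "b < q ^ (m - j) - 1"
          then have "b + 1 \<le> q ^ (m - j) - 1" by simp
          then have "(b + 1) * q ^ j \<le> (q ^ (m - j) - 1) * q ^ j" by (rule mult_right_mono) simp
          then have "a + b * q ^ j < (q ^ j - 1) + (q ^ (m - j) - 1) * q ^ j" using a_lt by (simp add: algebra_simps)
          also have "\<dots> = q ^ m - 1" using idq qm by metis
          finally show False using h by simp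
        qed
      qed
      then have "y = (q ^ (m - j) - 1) + (q ^ j - 1) * q ^ (m - j)" using yab by simp
      also have "\<dots> = q ^ j * q ^ (m - j) - 1"
        by (rule aux_id) (use pos1 in auto)
      also have "\<dots> = q ^ m - 1" using qm by (simp add: mult.commute)
      finally show False using y by simp
    qed
    ultimately show ?thesis by simp
  qed
  show ?thesis unfolding eq using le by (simp add: a_def b_def)
qed

lemma coprime_qN: fixes q m :: nat assumes "q \<ge> 2" "m \<ge> 1" shows "coprime (q ^ m - 1) q"
proof -
  have "coprime (q ^ m - 1) (q ^ m)" using assms by (intro coprime_diff_one_left_nat) simp
  moreover have "q ^ m = q * q ^ (m - 1)" using assms by (cases m) auto
  ultimately show ?thesis by simp
qed

lemma rot_nonzero: fixes q m x j :: nat assumes "q \<ge> 2" "m \<ge> 1" "0 < x" "x < q ^ m - 1"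
  shows "x * q ^ j mod (q ^ m - 1) \<noteq> 0"
proof
  assume "x * q ^ j mod (q ^ m - 1) = 0"
  then have d: "(q ^ m - 1) dvd x * q ^ j" by auto
  have "coprime (q ^ m - 1) (q ^ j)" using coprime_qN[OF assms(1,2)] by simp
  then have "(q ^ m - 1) dvd x" using d coprime_dvd_mult_left_iff by blast
  then show False using assms(3,4) by (auto dest: dvd_imp_le)
qed

lemma compl_rot: fixes q m y j :: nat assumes "q \<ge> 2" "m \<ge> 1" "0 < y" "y < q ^ m - 1"
  shows "(q ^ m - 1 - y) * q ^ j mod (q ^ m - 1) = q ^ m - 1 - (y * q ^ j mod (q ^ m - 1))"
proof -
  define N where "N = q ^ m - 1"
  have N0: "N > 0" using assms unfolding N_def by linarith
  define u where "u = y * q ^ j mod N"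
  define w where "w = (N - y) * q ^ j mod N"
  have u0: "u \<noteq> 0" unfolding u_def N_def using rot_nonzero[OF assms] .
  have uN: "u < N" "w < N" unfolding u_def w_def using N0 by auto
  have "(N - y) * q ^ j + y * q ^ j = N * q ^ j" using assms(4) unfolding N_def
    by (simp add: add_mult_distrib[symmetric])
  then have "((N - y) * q ^ j + y * q ^ j) mod N = 0" by simp
  then have "(w + u) mod N = 0" unfolding u_def w_def by (simp add: mod_add_eq)
  then have "N dvd (w + u)" by auto
  then obtain k where k: "w + u = N * k" by auto
  have "k = 1"
  proof -
    have "N * k > 0" using k u0 by linarith
    then have k1: "k \<ge> 1" by (cases k) auto
    have "N * k < N * 2" using k uN by linarith
    then have "k < 2" by simp
    with k1 show ?thesis by simp
  qed
  then have "w = N - u" using k by simp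
  then show ?thesis unfolding w_def u_def N_def .
qed

lemma rot_mod_m: fixes q m x j :: nat assumes "q \<ge> 1"
  shows "x * q ^ j mod (q ^ m - 1) = x * q ^ (j mod m) mod (q ^ m - 1)"
  using cong_scalar_left[OF qm_cong[OF assms, of j m], of x] by (simp add: cong_def)

lemma coset_eq: fixes q m x :: nat assumes "q \<ge> 1" and that: "m \<ge> 1"
  shows "cyc_coset q (q ^ m - 1) x = (\<lambda>j. x * q ^ j mod (q ^ m - 1)) ` {..<m}"
proof
  show "cyc_coset q (q ^ m - 1) x \<subseteq> (\<lambda>j. x * q ^ j mod (q ^ m - 1)) ` {..<m}"
  proof
    fix z assume "z \<in> cyc_coset q (q ^ m - 1) x"
    then obtain j where "z = x * q ^ j mod (q ^ m - 1)" unfolding cyc_coset_def by auto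
    then have "z = x * q ^ (j mod m) mod (q ^ m - 1)" using rot_mod_m[OF assms(1)] by simp
    moreover have "j mod m < m" using that by simp
    ultimately show "z \<in> (\<lambda>j. x * q ^ j mod (q ^ m - 1)) ` {..<m}" by blast
  qed
  show "(\<lambda>j. x * q ^ j mod (q ^ m - 1)) ` {..<m} \<subseteq> cyc_coset q (q ^ m - 1) x"
    unfolding cyc_coset_def by auto
qed

lemma leader_iff: fixes q m x :: nat assumes "q \<ge> 2" "m \<ge> 1" "x < q ^ m - 1"
  shows "is_coset_leader q (q ^ m - 1) x \<longleftrightarrow> (\<forall>j. x \<le> x * q ^ j mod (q ^ m - 1))"
proof -
  let ?N = "q ^ m - 1"
  let ?C = "cyc_coset q ?N x"
  have fin: "finite ?C" using coset_eq[of q m x] assms by simp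
  have "x = x * q ^ 0 mod ?N" using assms(3) by simp
  then have xin: "x \<in> ?C" unfolding cyc_coset_def by blast
  have ne: "?C \<noteq> {}" using xin by blast
  have "x = Min ?C \<longleftrightarrow> (\<forall>z\<in>?C. x \<le> z)"
    using Min_eq_iff[OF fin ne, of x] xin by metis
  moreover have "(\<forall>z\<in>?C. x \<le> z) \<longleftrightarrow> (\<forall>j. x \<le> x * q ^ j mod ?N)"
    unfolding cyc_coset_def by blast
  ultimately show ?thesis unfolding is_coset_leader_def using assms(3) by blast
qed

lemma leader_y: fixes q m y :: nat assumes "q \<ge> 2" "m \<ge> 1" "0 < y" "y < q ^ m - 1"
  shows "is_coset_leader q (q ^ m - 1) (q ^ m - 1 - y) \<longleftrightarrow> (\<forall>j. y * q ^ j mod (q ^ m - 1) \<le> y)"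
proof -
  have "q ^ m - 1 - y < q ^ m - 1" using assms by linarith
  then have "is_coset_leader q (q ^ m - 1) (q ^ m - 1 - y) \<longleftrightarrow>
     (\<forall>j. q ^ m - 1 - y \<le> q ^ m - 1 - (y * q ^ j mod (q ^ m - 1)))"
    using leader_iff[OF assms(1,2)] compl_rot[OF assms] by simp
  also have "\<dots> \<longleftrightarrow> (\<forall>j. y * q ^ j mod (q ^ m - 1) \<le> y)"
  proof -
    have "(q ^ m - 1 - y \<le> q ^ m - 1 - (y * q ^ j mod (q ^ m - 1))) \<longleftrightarrow> (y * q ^ j mod (q ^ m - 1) \<le> y)" for j
    proof -
      have "q ^ m - 1 > 0" using assms(3,4) by linarith
      then have "y * q ^ j mod (q ^ m - 1) < q ^ m - 1" by (rule mod_less_divisor)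
      then show ?thesis using assms(4) by linarith
    qed
    then show ?thesis by simp
  qed
  finally show ?thesis .
qed

lemma maxrot_all: fixes q m y :: nat assumes "q \<ge> 1" "m \<ge> 1" "y < q ^ m - 1"
    "\<And>j. 0 < j \<Longrightarrow> j < m \<Longrightarrow> y * q ^ j mod (q ^ m - 1) \<le> y"
  shows "y * q ^ j mod (q ^ m - 1) \<le> y"
proof -
  have e: "y * q ^ j mod (q ^ m - 1) = y * q ^ (j mod m) mod (q ^ m - 1)" using rot_mod_m[OF assms(1)] .
  show ?thesis unfolding e
  proof (cases "j mod m = 0")
    case True then show "y * q ^ (j mod m) mod (q ^ m - 1) \<le> y" using assms(3) by simp
  next
    case False
    moreover have "j mod m < m" using assms(2) by simp
    ultimately show "y * q ^ (j mod m) mod (q ^ m - 1) \<le> y" using assms(4)[of "j mod m"] by simp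
  qed
qed

lemma card_coset: fixes q m x :: nat assumes "q \<ge> 1" "m \<ge> 1" "x < q ^ m - 1"
    "\<And>j. 0 < j \<Longrightarrow> j < m \<Longrightarrow> x * q ^ j mod (q ^ m - 1) \<noteq> x"
  shows "card (cyc_coset q (q ^ m - 1) x) = m"
proof -
  let ?N = "q ^ m - 1"
  have key: "False" if a: "i < k" "k < m" "x * q ^ i mod ?N = x * q ^ k mod ?N" for i k
  proof -
    have "[x * q ^ i = x * q ^ k] (mod ?N)" using a(3) unfolding cong_def .
    then have c0: "[x * q ^ i * q ^ (m - k) = x * q ^ k * q ^ (m - k)] (mod ?N)" by (rule cong_scalar_right)
    have e1: "x * q ^ i * q ^ (m - k) = x * q ^ (i + (m - k))" by (simp add: power_add mult.assoc)
    have "q ^ k * q ^ (m - k) = q ^ (k + (m - k))" by (rule power_add[symmetric])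
    also have "k + (m - k) = m" using a by simp
    finally have "q ^ k * q ^ (m - k) = q ^ m" .
    then have e2: "x * q ^ k * q ^ (m - k) = x * q ^ m" by (simp add: mult.assoc)
    have c1: "[x * q ^ (i + (m - k)) = x * q ^ m] (mod ?N)" using c0 unfolding e1 e2 .
    have c2: "[x * q ^ m = x * 1] (mod ?N)" by (intro cong_scalar_left qm1_cong[OF assms(1)])
    have "[x * q ^ (i + (m - k)) = x * 1] (mod ?N)" using c1 c2 by (rule cong_trans)
    then have "x * q ^ (i + (m - k)) mod ?N = x mod ?N" unfolding cong_def by simp
    also have "x mod ?N = x" using assms(3) by simp
    finally have eq: "x * q ^ (i + (m - k)) mod ?N = x" .
    have h0: "0 < i + (m - k)" and h1: "i + (m - k) < m" using a(1,2) by auto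
    have ne: "x * q ^ (i + (m - k)) mod ?N \<noteq> x" by (rule assms(4)[OF h0 h1])
    from ne eq show False by (rule notE)
  qed
  have "inj_on (\<lambda>j. x * q ^ j mod ?N) {..<m}"
  proof (rule inj_onI, rule ccontr)
    fix i k assume ik: "i \<in> {..<m}" "k \<in> {..<m}" "x * q ^ i mod ?N = x * q ^ k mod ?N" "i \<noteq> k"
    show False
    proof (cases "i < k")
      case True then show False using key[of i k] ik by simp
    next
      case False then have "k < i" using ik by simp
      then show False using key[of k i] ik by simp
    qed
  qed
  then have "card ((\<lambda>j. x * q ^ j mod ?N) ` {..<m}) = m" by (simp add: card_image)
  then show ?thesis using coset_eq[OF assms(1) assms(2)] by simp
qed

lemma digit_expansion: fixes q y m :: nat assumes "q \<ge> 2"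
  shows "y < q ^ m \<Longrightarrow> y = (\<Sum>i<m. (y div q ^ i mod q) * q ^ i)"
proof (induction m arbitrary: y)
  case 0 then show ?case by simp
next
  case (Suc m)
  have q0: "q > 0" using assms by simp
  have "y div q < q ^ m" using Suc.prems q0 by (simp add: div_less_iff_less_mult mult.commute)
  then have IH: "y div q = (\<Sum>i<m. (y div q div q ^ i mod q) * q ^ i)" using Suc.IH by blast
  have "(\<Sum>i<Suc m. (y div q ^ i mod q) * q ^ i) = y mod q + (\<Sum>i<m. (y div q ^ Suc i mod q) * q ^ Suc i)"
    by (simp only: sum.lessThan_Suc_shift) simp
  also have "(\<Sum>i<m. (y div q ^ Suc i mod q) * q ^ Suc i) = q * (\<Sum>i<m. (y div q div q ^ i mod q) * q ^ i)"
    by (simp add: sum_distrib_left div_mult2_eq algebra_simps)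
  also have "\<dots> = q * (y div q)" using IH by simp
  finally show ?case by simp
qed

lemma digit_top: fixes q m y i :: nat
  assumes q2: "q \<ge> 2" and y: "y < q ^ m - 1" and i: "i < m"
    and r: "y * q ^ (m - 1 - i) mod (q ^ m - 1) \<le> y"
  shows "y div q ^ i mod q \<le> y div q ^ (m - 1)"
proof -
  define j where "j = m - 1 - i"
  have mj: "m - j = i + 1" using i unfolding j_def by simp
  have rf: "y * q ^ j mod (q ^ m - 1) = (y mod q ^ (i + 1)) * q ^ j + y div q ^ (i + 1)"
    using rot_formula[OF q2 y, of j] mj unfolding j_def by simp
  have q0: "q > 0" using q2 by simp
  have "q ^ m = q ^ (i + 1 + j)" using i unfolding j_def by simp
  also have "\<dots> = q ^ (i + 1) * q ^ j" by (rule power_add)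
  finally have qm: "q ^ m = q ^ (i + 1) * q ^ j" .
  have lt: "y div q ^ (i + 1) < q ^ j"
  proof -
    have "y < q ^ (i + 1) * q ^ j" using y qm by simp
    then show ?thesis using q0 by (simp add: div_less_iff_less_mult mult.commute)
  qed
  have "((y mod q ^ (i + 1)) * q ^ j + y div q ^ (i + 1)) div q ^ j = y mod q ^ (i + 1)"
    using lt q0 by simp
  moreover have "(y mod q ^ (i + 1)) div q ^ i = y div q ^ i mod q"
  proof -
    have "y mod q ^ (i + 1) = y mod (q ^ i * q)" by (simp add: mult.commute)
    also have "\<dots> = q ^ i * (y div q ^ i mod q) + y mod q ^ i" by (rule mod_mult2_eq)
    finally show ?thesis using q0 by simp
  qed
  moreover have "q ^ (m - 1) = q ^ j * q ^ i"
  proof -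
    have "q ^ (m - 1) = q ^ (j + i)" using i unfolding j_def by simp
    then show ?thesis by (simp add: power_add)
  qed
  ultimately have "y * q ^ j mod (q ^ m - 1) div q ^ (m - 1) = y div q ^ i mod q"
    unfolding rf by (simp add: div_mult2_eq)
  moreover have "y * q ^ j mod (q ^ m - 1) div q ^ (m - 1) \<le> y div q ^ (m - 1)"
    using r unfolding j_def by (rule div_le_mono)
  ultimately show ?thesis by simp
qed

lemma zero_one_pw: fixes q m y :: nat assumes "q \<ge> 2" "y < q ^ m"
    "\<And>i. i < m \<Longrightarrow> y div q ^ i mod q \<le> 1"
  shows "y = pw q {i. i < m \<and> y div q ^ i mod q = 1}"
proof -
  have "y = (\<Sum>i<m. (y div q ^ i mod q) * q ^ i)" using digit_expansion[OF assms(1,2)] .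
  also have "\<dots> = (\<Sum>i\<in>{i. i < m \<and> y div q ^ i mod q = 1}. q ^ i)"
  proof -
    have "(\<Sum>i<m. (y div q ^ i mod q) * q ^ i) = (\<Sum>i<m. if y div q ^ i mod q = 1 then q ^ i else 0)"
    proof (rule sum.cong)
      fix i assume "i \<in> {..<m}"
      then have "y div q ^ i mod q \<le> 1" using assms(3) by simp
      then show "(y div q ^ i mod q) * q ^ i = (if y div q ^ i mod q = 1 then q ^ i else 0)"
        by (cases "y div q ^ i mod q") auto
    qed simp
    also have "\<dots> = (\<Sum>i\<in>{i\<in>{..<m}. y div q ^ i mod q = 1}. q ^ i)"
      by (rule sum.inter_filter[symmetric]) simp
    also have "{i\<in>{..<m}. y div q ^ i mod q = 1} = {i. i < m \<and> y div q ^ i mod q = 1}" by auto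
    finally show ?thesis .
  qed
  finally show ?thesis unfolding pw_def .
qed

definition maxrot :: "nat \<Rightarrow> nat \<Rightarrow> nat set \<Rightarrow> bool" where
  "maxrot q m A \<longleftrightarrow> (\<forall>j. pw q (rotset m j A) \<le> pw q A)"

lemma modm: "k < m \<Longrightarrow> (m + k) mod (m::nat) = k"
  by simp

lemma modm2: "x = m + k \<Longrightarrow> k < m \<Longrightarrow> x mod (m::nat) = k"
  by simp

lemma pw3: "v < u \<Longrightarrow> u < w \<Longrightarrow> pw q {w, u, v} = q ^ w + q ^ u + q ^ v"
  by (simp add: pw_def)

lemma pw2: "u < w \<Longrightarrow> pw q {w, u} = q ^ w + q ^ u"
  by (simp add: pw_def)

lemma rot3v: fixes m u v :: nat assumes "v < u" "u < m - 1"
  shows "rotset m (m - 1 - v) {m - 1, u, v} = {m - 1, m - 2 - v, u - v - 1}"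
proof -
  have "(m - 1 + (m - 1 - v)) mod m = m - 2 - v"
  proof -
    have h: "m - 1 + (m - 1 - v) = m + (m - 2 - v)" using assms by simp
    have "(m + (m - 2 - v)) mod m = m - 2 - v" by (rule modm) (use assms in simp)
    then show ?thesis by (simp only: h)
  qed
  moreover have "(u + (m - 1 - v)) mod m = u - v - 1"
    by (rule modm2) (use assms in linarith)+
  moreover have "(v + (m - 1 - v)) mod m = m - 1" using assms by simp
  ultimately show ?thesis unfolding rotset_def by auto
qed

lemma rot3u: fixes m u v :: nat assumes "v < u" "u < m - 1"
  shows "rotset m (m - 1 - u) {m - 1, u, v} = {m - 1, m - 1 - u + v, m - 2 - u}"
proof -
  have "(m - 1 + (m - 1 - u)) mod m = m - 2 - u"
  proof -
    have h: "m - 1 + (m - 1 - u) = m + (m - 2 - u)" using assms by simp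
    have "(m + (m - 2 - u)) mod m = m - 2 - u" by (rule modm) (use assms in simp)
    then show ?thesis by (simp only: h)
  qed
  moreover have "(u + (m - 1 - u)) mod m = m - 1" using assms by simp
  moreover have "(v + (m - 1 - u)) mod m = m - 1 - u + v" using assms by simp
  ultimately show ?thesis unfolding rotset_def by auto
qed

lemma refine: fixes q m u v :: nat assumes q2: "q \<ge> 2" and "v < u" "u < m - 1" "m - 2 - v = u" "v < u - v - 1"
    and mr: "maxrot q m {m - 1, u, v}"
  shows False
proof -
  have "pw q (rotset m (m - 1 - v) {m - 1, u, v}) \<le> pw q {m - 1, u, v}"
    using mr unfolding maxrot_def by blast
  then have "pw q {m - 1, u, u - v - 1} \<le> pw q {m - 1, u, v}"
    using rot3v[OF assms(2,3)] assms(4) by simp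
  moreover have "u - v - 1 < u" using assms by simp
  moreover have "pw q {m - 1, u, u - v - 1} = q ^ (m - 1) + q ^ u + q ^ (u - v - 1)"
    by (rule pw3) (use assms in auto)
  moreover have "pw q {m - 1, u, v} = q ^ (m - 1) + q ^ u + q ^ v"
    by (rule pw3) (use assms in auto)
  ultimately have "q ^ (m - 1) + q ^ u + q ^ (u - v - 1) \<le> q ^ (m - 1) + q ^ u + q ^ v"
    by simp
  moreover have "q ^ v < q ^ (u - v - 1)" using q2 assms(5) by (intro power_strict_increasing) auto
  ultimately show False by simp
qed

lemma gapF2: fixes q m p e t :: nat
  assumes q3: "q \<ge> 3" and A: "A \<subseteq> {..<m}" and top: "m - 1 \<in> A" and p: "p \<in> A" "p < m - 1"
    and hmax: "\<forall>i\<in>A. i < m - 1 \<longrightarrow> i \<le> p" and mr: "maxrot q m A"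
    and e: "e \<in> A" and t: "1 \<le> t" "t + p + 2 \<le> m"
  shows "(e + m - t) mod m \<notin> A"
proof
  assume f: "(e + m - t) mod m \<in> A"
  have fin: "finite A" using A finite_subset by blast
  have em: "e < m" using e A by auto
  define L where "L = {i\<in>A. i < p}"
  have AL: "A = insert (m - 1) (insert p L)"
  proof (rule set_eqI)
    fix x show "x \<in> A \<longleftrightarrow> x \<in> insert (m - 1) (insert p L)"
    proof
      assume x: "x \<in> A"
      then have "x < m" using A by auto
      then show "x \<in> insert (m - 1) (insert p L)" using x hmax unfolding L_def by fastforce
    next
      assume "x \<in> insert (m - 1) (insert p L)"
      then show "x \<in> A" using p top unfolding L_def by auto
    qed
  qed
  have finL: "finite L" unfolding L_def using fin by simp
  have pwA: "pw q A = q ^ (m - 1) + q ^ p + pw q L"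
    unfolding AL using p finL by (simp add: pw_insert L_def)
  have "pw q L < q ^ p" using pw_lt[OF q3, of L p] unfolding L_def by auto
  then have "pw q A < q ^ (m - 1) + 2 * q ^ p" using pwA by simp
  also have "\<dots> < q ^ (m - 1) + q ^ (p + 1)" using q3 by simp
  also have "q ^ (p + 1) \<le> q ^ (m - 1 - t)" using q3 t by (intro power_increasing) auto
  finally have lt: "pw q A < q ^ (m - 1) + q ^ (m - 1 - t)" by simp
  have r1: "(e + (m - 1 - e)) mod m = m - 1" using em by simp
  have r2: "((e + m - t) mod m + (m - 1 - e)) mod m = m - 1 - t"
  proof -
    have "((e + m - t) mod m + (m - 1 - e)) mod m = (e + m - t + (m - 1 - e)) mod m"
      by (simp add: mod_add_left_eq)
    also have "\<dots> = m - 1 - t" by (rule modm2) (use em t in linarith)+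
    finally show ?thesis .
  qed
  have s1: "m - 1 \<in> rotset m (m - 1 - e) A"
    unfolding rotset_def by (rule image_eqI[of _ _ e]) (use r1 e in auto)
  have s2: "m - 1 - t \<in> rotset m (m - 1 - e) A"
    unfolding rotset_def by (rule image_eqI[of _ _ "(e + m - t) mod m"]) (use r2 f in auto)
  have sub: "{m - 1, m - 1 - t} \<subseteq> rotset m (m - 1 - e) A" using s1 s2 by simp
  have "m \<ge> 1" using em by simp
  then have "finite (rotset m (m - 1 - e) A)" using finite_subset[OF rotset_sub] by blast
  then have "pw q {m - 1, m - 1 - t} \<le> pw q (rotset m (m - 1 - e) A)" using sub by (rule pw_mono)
  moreover have "pw q {m - 1, m - 1 - t} = q ^ (m - 1) + q ^ (m - 1 - t)" using t by (intro pw2) auto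
  moreover have "pw q (rotset m (m - 1 - e) A) \<le> pw q A" using mr unfolding maxrot_def by blast
  ultimately show False using lt by simp
qed

lemma struct:
  fixes q m a b :: nat and A :: "nat set"
  assumes q3: "q \<ge> 3" and m3: "m \<ge> 3" and A: "A \<subseteq> {..<m}" and top: "m - 1 \<in> A"
    and odd: "odd (card A)" and ne: "A \<noteq> {m - 1}" and mr: "maxrot q m A"
    and lt: "pw q A < q ^ (m - 1) + q ^ a + q ^ b" and ba: "b < a" and am: "a \<le> m - 1"
  obtains p L where "A = insert (m - 1) (insert p L)" "p < m - 1" "\<forall>e\<in>L. e < p" "L \<noteq> {}"
    "odd (card L)" "\<forall>e\<in>L. m \<le> e + p + 2" "\<forall>e\<in>L. e + m \<le> 2 * p + 1" "m \<le> p + p + 2"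
    "p \<le> a" "p = a \<longrightarrow> (\<forall>e\<in>L. e < b)"
proof -
  have fin: "finite A" using A finite_subset by blast
  define B where "B = A - {m - 1}"
  have finB: "finite B" unfolding B_def using fin by simp
  have neB: "B \<noteq> {}" unfolding B_def using ne top by blast
  define p where "p = Max B"
  have pB: "p \<in> B" unfolding p_def using finB neB by (rule Max_in)
  have pA: "p \<in> A" and pne: "p \<noteq> m - 1" using pB unfolding B_def by auto
  have "p < m" using pA A by auto
  then have pm: "p < m - 1" using pne by simp
  have hmax: "\<forall>i\<in>A. i < m - 1 \<longrightarrow> i \<le> p"
  proof (intro ballI impI)
    fix i assume "i \<in> A" "i < m - 1"
    then have "i \<in> B" unfolding B_def by simp
    then show "i \<le> p" unfolding p_def using finB by simp
  qed
  define L where "L = {i\<in>A. i < p}"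
  have finL: "finite L" unfolding L_def using fin by simp
  have AL: "A = insert (m - 1) (insert p L)"
  proof (rule set_eqI)
    fix x show "x \<in> A \<longleftrightarrow> x \<in> insert (m - 1) (insert p L)"
    proof
      assume x: "x \<in> A"
      then have "x < m" using A by auto
      then show "x \<in> insert (m - 1) (insert p L)" using x hmax unfolding L_def by fastforce
    next
      assume "x \<in> insert (m - 1) (insert p L)"
      then show "x \<in> A" using pA top unfolding L_def by auto
    qed
  qed
  have Llt: "\<forall>e\<in>L. e < p" unfolding L_def by simp
  have nm: "m - 1 \<notin> insert p L" using pm Llt by auto
  have np: "p \<notin> L" using Llt by auto
  have cardA: "card A = card L + 2" unfolding AL using nm np finL by simp
  then have oddL: "odd (card L)" using odd by simp
  then have neL: "L \<noteq> {}" by auto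
  have pwA: "pw q A = q ^ (m - 1) + q ^ p + pw q L"
    unfolding AL using nm np finL by (simp add: pw_insert)
  have F3: "m \<le> e + p + 2" if e: "e \<in> A" for e
  proof (rule ccontr)
    assume "\<not> m \<le> e + p + 2"
    then have t: "1 \<le> e + 1" "(e + 1) + p + 2 \<le> m" by auto
    have "(e + m - (e + 1)) mod m \<notin> A"
      by (rule gapF2[OF q3 A top pA pm hmax mr e t])
    moreover have "(e + m - (e + 1)) mod m = m - 1" using m3 by simp
    ultimately show False using top by simp
  qed
  have F4: "e + m \<le> 2 * p + 1" if e: "e \<in> L" for e
  proof (rule ccontr)
    assume c: "\<not> e + m \<le> 2 * p + 1"
    have ep: "e < p" using e Llt by auto
    then have t: "1 \<le> p - e" "(p - e) + p + 2 \<le> m" using c by auto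
    have "(p + m - (p - e)) mod m \<notin> A"
      by (rule gapF2[OF q3 A top pA pm hmax mr pA t])
    moreover have "(p + m - (p - e)) mod m = e"
      by (rule modm2) (use ep pm in linarith)+
    moreover have "e \<in> A" using e unfolding L_def by simp
    ultimately show False by simp
  qed
  have pL: "pw q L < q ^ p" using pw_lt[OF q3, of L p] Llt by auto
  have pa: "p \<le> a"
  proof (rule ccontr)
    assume "\<not> p \<le> a"
    then have "q ^ (a + 1) \<le> q ^ p" using q3 by (intro power_increasing) auto
    moreover have "q ^ b < q ^ a" using q3 ba by (intro power_strict_increasing) auto
    moreover have "q ^ (a + 1) \<ge> 3 * q ^ a" using q3 by simp
    ultimately have "q ^ a + q ^ b < q ^ p" by linarith
    then show False using lt pwA by linarith
  qed
  have pb: "p = a \<longrightarrow> (\<forall>e\<in>L. e < b)"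
  proof (intro impI ballI)
    fix e assume "p = a" "e \<in> L"
    then have "pw q L < q ^ b" using lt pwA by simp
    moreover have "q ^ e \<le> pw q L" using finL \<open>e \<in> L\<close> by (rule pw_elem)
    ultimately have "q ^ e < q ^ b" by simp
    then show "e < b" using q3 by (simp add: power_less_imp_less_exp)
  qed
  have "m \<le> p + p + 2" using F3[OF pA] .
  then show ?thesis using that[OF AL pm Llt neL oddL] F3 F4 pa pb unfolding L_def by auto
qed

lemma sub1: "L \<subseteq> {c} \<Longrightarrow> L \<noteq> {} \<Longrightarrow> L = {c}" by blast

lemma sub2: assumes "L \<subseteq> {c, d}" "c \<noteq> d" "odd (card L)" shows "L = {c} \<or> L = {d}"
proof (cases "c \<in> L")
  case True
  show ?thesis
  proof (cases "d \<in> L")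
    case True
    then have "L = {c, d}" using \<open>c \<in> L\<close> assms(1) by blast
    then show ?thesis using assms by simp
  next
    case False then show ?thesis using True assms(1) by blast
  qed
next
  case False
  show ?thesis
  proof (cases "d \<in> L")
    case True then show ?thesis using False assms(1) by blast
  next
    case F2: False
    then have "L = {}" using False assms(1) by blast
    then show ?thesis using assms by simp
  qed
qed

lemma classify0:
  fixes q m j :: nat and A :: "nat set"
  assumes mj: "m = 3 * j" "j \<ge> 1" and q3: "q \<ge> 3" and A: "A \<subseteq> {..<m}" and top: "m - 1 \<in> A"
    and odd: "odd (card A)" and mr: "maxrot q m A"
    and lt: "pw q A < q ^ (m - 1) + q ^ (2 * j) + q ^ (j - 1)"
  shows "A = {m - 1} \<or> A = {m - 1, 2 * j - 1, j - 1}"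
proof (cases "A = {m - 1}")
  case True then show ?thesis by simp
next
  case ne: False
  have m3: "m \<ge> 3" and ba: "j - 1 < 2 * j" and am: "2 * j \<le> m - 1" using mj by auto
  obtain p L where AL: "A = insert (m - 1) (insert p L)" and pm: "p < m - 1" and Llt: "\<forall>e\<in>L. e < p"
    and neL: "L \<noteq> {}" and oddL: "odd (card L)" and F3: "\<forall>e\<in>L. m \<le> e + p + 2"
    and F4: "\<forall>e\<in>L. e + m \<le> 2 * p + 1" and F3p: "m \<le> p + p + 2" and pa: "p \<le> 2 * j" and pb: "p = 2 * j \<longrightarrow> (\<forall>e\<in>L. e < j - 1)"
    by (rule struct[OF q3 m3 A top odd ne mr lt ba am])
  obtain e0 where e0: "e0 \<in> L" using neL by blast
  have "m \<le> e0 + p + 2" "e0 + m \<le> 2 * p + 1" using e0 F3 F4 by auto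
  then have p1: "p \<ge> 2 * j - 1" using mj by linarith
  show ?thesis
  proof (cases "p = 2 * j")
    case True
    then have LL: "\<forall>e\<in>L. e = j - 2 \<and> j \<ge> 2" using pb F3 mj by fastforce
    then have j2: "j \<ge> 2" using e0 by blast
    have L: "L = {j - 2}" by (intro sub1) (use LL neL in auto)
    have "maxrot q m {m - 1, 2 * j, j - 2}" using mr AL L True by simp
    moreover have "j - 2 < 2 * j" "2 * j < m - 1" "m - 2 - (j - 2) = 2 * j" "j - 2 < 2 * j - (j - 2) - 1"
      using mj j2 by auto
    ultimately have False using refine[of q "j - 2" "2 * j" m] q3 by auto
    then show ?thesis ..
  next
    case False
    then have p: "p = 2 * j - 1" using pa p1 by simp
    then have LL: "\<forall>e\<in>L. e = j - 1" using F3 F4 mj by fastforce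
    have "L = {j - 1}" by (intro sub1) (use LL neL in auto)
    then show ?thesis using AL p by simp
  qed
qed

lemma classify1:
  fixes q m j :: nat and A :: "nat set"
  assumes mj: "m = 3 * j + 1" "j \<ge> 1" and q3: "q \<ge> 3" and A: "A \<subseteq> {..<m}" and top: "m - 1 \<in> A"
    and odd: "odd (card A)" and mr: "maxrot q m A"
    and lt: "pw q A < q ^ (m - 1) + q ^ (2 * j + 1) + q ^ (j - 1)"
  shows "A = {m - 1} \<or> A = {m - 1, 2 * j, j}"
proof (cases "A = {m - 1}")
  case True then show ?thesis by simp
next
  case ne: False
  have m3: "m \<ge> 3" and ba: "j - 1 < 2 * j + 1" and am: "2 * j + 1 \<le> m - 1" using mj by auto
  obtain p L where AL: "A = insert (m - 1) (insert p L)" and pm: "p < m - 1" and Llt: "\<forall>e\<in>L. e < p"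
    and neL: "L \<noteq> {}" and oddL: "odd (card L)" and F3: "\<forall>e\<in>L. m \<le> e + p + 2"
    and F4: "\<forall>e\<in>L. e + m \<le> 2 * p + 1" and F3p: "m \<le> p + p + 2" and pa: "p \<le> 2 * j + 1" and pb: "p = 2 * j + 1 \<longrightarrow> (\<forall>e\<in>L. e < j - 1)"
    by (rule struct[OF q3 m3 A top odd ne mr lt ba am])
  obtain e0 where e0: "e0 \<in> L" using neL by blast
  have "m \<le> e0 + p + 2" "e0 + m \<le> 2 * p + 1" using e0 F3 F4 by auto
  then have p1: "p \<ge> 2 * j" using mj by linarith
  show ?thesis
  proof (cases "p = 2 * j + 1")
    case True
    then have LL: "\<forall>e\<in>L. e = j - 2 \<and> j \<ge> 2" using pb F3 mj by fastforce
    then have j2: "j \<ge> 2" using e0 by blast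
    have L: "L = {j - 2}" by (intro sub1) (use LL neL in auto)
    have "maxrot q m {m - 1, 2 * j + 1, j - 2}" using mr AL L True by simp
    moreover have "j - 2 < 2 * j + 1" "2 * j + 1 < m - 1" "m - 2 - (j - 2) = 2 * j + 1"
        "j - 2 < 2 * j + 1 - (j - 2) - 1"
      using mj j2 by auto
    ultimately have False using refine[of q "j - 2" "2 * j + 1" m] q3 by auto
    then show ?thesis ..
  next
    case False
    then have p: "p = 2 * j" using pa p1 by simp
    then have "\<forall>e\<in>L. e = j - 1 \<or> e = j" using F3 F4 mj by fastforce
    then have Ls: "L \<subseteq> {j - 1, j}" by blast
    have "j - 1 \<noteq> j" using mj by simp
    then have "L = {j - 1} \<or> L = {j}" using sub2[OF Ls _ oddL] by blast
    then show ?thesis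
    proof
      assume L: "L = {j - 1}"
      have "maxrot q m {m - 1, 2 * j, j - 1}" using mr AL L p by simp
      moreover have "j - 1 < 2 * j" "2 * j < m - 1" "m - 2 - (j - 1) = 2 * j"
          "j - 1 < 2 * j - (j - 1) - 1"
        using mj by auto
      ultimately have False using refine[of q "j - 1" "2 * j" m] q3 by auto
      then show ?thesis ..
    next
      assume "L = {j}" then show ?thesis using AL p by simp
    qed
  qed
qed

lemma classify2:
  fixes q m j :: nat and A :: "nat set"
  assumes mj: "m = 3 * j + 2" "j \<ge> 1" and q3: "q \<ge> 3" and A: "A \<subseteq> {..<m}" and top: "m - 1 \<in> A"
    and odd: "odd (card A)" and mr: "maxrot q m A"
    and lt: "pw q A < q ^ (m - 1) + q ^ (2 * j + 1) + q ^ (j + 1)"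
  shows "A = {m - 1} \<or> A = {m - 1, 2 * j + 1, j}"
proof (cases "A = {m - 1}")
  case True then show ?thesis by simp
next
  case ne: False
  have m3: "m \<ge> 3" and ba: "j + 1 < 2 * j + 1" and am: "2 * j + 1 \<le> m - 1" using mj by auto
  obtain p L where AL: "A = insert (m - 1) (insert p L)" and pm: "p < m - 1" and Llt: "\<forall>e\<in>L. e < p"
    and neL: "L \<noteq> {}" and oddL: "odd (card L)" and F3: "\<forall>e\<in>L. m \<le> e + p + 2"
    and F4: "\<forall>e\<in>L. e + m \<le> 2 * p + 1" and F3p: "m \<le> p + p + 2" and pa: "p \<le> 2 * j + 1" and pb: "p = 2 * j + 1 \<longrightarrow> (\<forall>e\<in>L. e < j + 1)"
    by (rule struct[OF q3 m3 A top odd ne mr lt ba am])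
  obtain e0 where e0: "e0 \<in> L" using neL by blast
  have "m \<le> e0 + p + 2" "e0 + m \<le> 2 * p + 1" using e0 F3 F4 by auto
  then have p: "p = 2 * j + 1" using mj pa by linarith
  then have "\<forall>e\<in>L. e = j - 1 \<or> e = j" using F3 pb mj by fastforce
  then have Ls: "L \<subseteq> {j - 1, j}" by blast
  have "j - 1 \<noteq> j" using mj by simp
  then have "L = {j - 1} \<or> L = {j}" using sub2[OF Ls _ oddL] by blast
  then show ?thesis
  proof
    assume L: "L = {j - 1}"
    have "maxrot q m {m - 1, 2 * j + 1, j - 1}" using mr AL L p by simp
    moreover have "j - 1 < 2 * j + 1" "2 * j + 1 < m - 1" "m - 2 - (j - 1) = 2 * j + 1"
        "j - 1 < 2 * j + 1 - (j - 1) - 1"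
      using mj by auto
    ultimately have False using refine[of q "j - 1" "2 * j + 1" m] q3 by auto
    then show ?thesis ..
  next
    assume "L = {j}" then show ?thesis using AL p by simp
  qed
qed

lemma rotset_mod: "rotset m j A = rotset m (j mod m) A"
  unfolding rotset_def by (simp add: mod_add_right_eq)

lemma rot_top: fixes m x j :: nat assumes "j < m" "x < m" "(x + j) mod m = m - 1" shows "j = m - 1 - x"
proof (cases "x + j < m")
  case True then show ?thesis using assms by simp
next
  case False
  have "(x + j) mod m = x + j - m" by (rule modm2) (use False assms in linarith)+
  then show ?thesis using assms by linarith
qed

lemma lex3: fixes q w u v u' v' :: nat assumes q2: "q \<ge> 2" and "v < u" "u < w" "v' < u'" "u' < w"
  and c: "u' < u \<or> (u' = u \<and> v' < v)"
  shows "pw q {w, u', v'} < pw q {w, u, v}"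
proof -
  have e1: "pw q {w, u', v'} = q ^ w + q ^ u' + q ^ v'" by (rule pw3) (use assms in auto)
  have e2: "pw q {w, u, v} = q ^ w + q ^ u + q ^ v" by (rule pw3) (use assms in auto)
  have "q ^ u' + q ^ v' < q ^ u + q ^ v"
    using c
  proof
    assume "u' < u"
    have "q ^ v' < q ^ u'" using q2 assms by (intro power_strict_increasing) auto
    then have "q ^ u' + q ^ v' < 2 * q ^ u'" by simp
    also have "\<dots> \<le> q * q ^ u'" using q2 by simp
    also have "\<dots> = q ^ (u' + 1)" by simp
    also have "\<dots> \<le> q ^ u" using q2 \<open>u' < u\<close> by (intro power_increasing) auto
    finally show ?thesis by simp
  next
    assume "u' = u \<and> v' < v"
    moreover then have "q ^ v' < q ^ v" using q2 by (intro power_strict_increasing) auto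
    ultimately show ?thesis by simp
  qed
  then show ?thesis using e1 e2 by simp
qed

lemma rot_cases3: fixes m u v j :: nat assumes "v < u" "u < m - 1" "j < m"
  shows "(j = 0 \<and> rotset m j {m - 1, u, v} = {m - 1, u, v})
    \<or> (j = m - 1 - u \<and> rotset m j {m - 1, u, v} = {m - 1, m - 1 - u + v, m - 2 - u})
    \<or> (j = m - 1 - v \<and> rotset m j {m - 1, u, v} = {m - 1, m - 2 - v, u - v - 1})
    \<or> rotset m j {m - 1, u, v} \<subseteq> {..<m - 1}"
proof (cases "m - 1 \<in> rotset m j {m - 1, u, v}")
  case False
  have "rotset m j {m - 1, u, v} \<subseteq> {..<m}" using assms by (intro rotset_sub) auto
  then have "rotset m j {m - 1, u, v} \<subseteq> {..<m - 1}" using False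
  proof -
    assume s: "rotset m j {m - 1, u, v} \<subseteq> {..<m}"
    show ?thesis
    proof
      fix z assume z: "z \<in> rotset m j {m - 1, u, v}"
      then have "z < m" "z \<noteq> m - 1" using s False by auto
      then show "z \<in> {..<m - 1}" by simp
    qed
  qed
  then show ?thesis by (intro disjI2)
next
  case True
  then obtain x where x: "x \<in> {m - 1, u, v}" "(x + j) mod m = m - 1" unfolding rotset_def by (elim imageE) simp
  have "x < m" using x(1) assms by auto
  then have j: "j = m - 1 - x" using rot_top[OF assms(3) _ x(2)] by simp
  have "x = m - 1 \<or> x = u \<or> x = v" using x(1) by simp
  then show ?thesis
  proof (elim disjE)
    assume "x = m - 1"
    then have "j = 0" using j by simp
    moreover have "rotset m 0 {m - 1, u, v} = {m - 1, u, v}" unfolding rotset_def using assms by auto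
    ultimately show ?thesis by simp
  next
    assume "x = u" then show ?thesis using j rot3u[OF assms(1,2)] by simp
  next
    assume "x = v" then show ?thesis using j rot3v[OF assms(1,2)] by simp
  qed
qed

lemma max3: fixes q m u v :: nat assumes q3: "q \<ge> 3" and uv: "v < u" "u < m - 1"
  and cu: "(m - 1 - u + v < u \<or> (m - 1 - u + v = u \<and> m - 2 - u < v)) \<or> (m - 1 - u + v = u \<and> m - 2 - u = v)"
  and cv: "(m - 2 - v < u \<or> (m - 2 - v = u \<and> u - v - 1 < v)) \<or> (m - 2 - v = u \<and> u - v - 1 = v)"
  shows "maxrot q m {m - 1, u, v}"
  unfolding maxrot_def
proof
  fix j
  have jm: "j mod m < m" using uv by simp
  have "pw q (rotset m (j mod m) {m - 1, u, v}) \<le> pw q {m - 1, u, v}"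
    using rot_cases3[OF uv jm]
  proof (elim disjE conjE)
    assume "rotset m (j mod m) {m - 1, u, v} = {m - 1, u, v}" then show ?thesis by simp
  next
    assume r: "rotset m (j mod m) {m - 1, u, v} = {m - 1, m - 1 - u + v, m - 2 - u}"
    show ?thesis using cu
    proof
      assume c: "m - 1 - u + v < u \<or> (m - 1 - u + v = u \<and> m - 2 - u < v)"
      have "pw q {m - 1, m - 1 - u + v, m - 2 - u} < pw q {m - 1, u, v}"
        by (rule lex3) (use q3 uv c in auto)
      then show ?thesis using r by simp
    next
      assume "m - 1 - u + v = u \<and> m - 2 - u = v" then show ?thesis using r by simp
    qed
  next
    assume r: "rotset m (j mod m) {m - 1, u, v} = {m - 1, m - 2 - v, u - v - 1}"
    show ?thesis using cv
    proof
      assume c: "m - 2 - v < u \<or> (m - 2 - v = u \<and> u - v - 1 < v)"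
      have "pw q {m - 1, m - 2 - v, u - v - 1} < pw q {m - 1, u, v}"
        by (rule lex3) (use q3 uv c in auto)
      then show ?thesis using r by simp
    next
      assume "m - 2 - v = u \<and> u - v - 1 = v" then show ?thesis using r by simp
    qed
  next
    assume r: "rotset m (j mod m) {m - 1, u, v} \<subseteq> {..<m - 1}"
    have "pw q (rotset m (j mod m) {m - 1, u, v}) < q ^ (m - 1)" using pw_lt[OF q3 r] .
    moreover have "q ^ (m - 1) \<le> pw q {m - 1, u, v}" by (rule pw_elem) auto
    ultimately show ?thesis by simp
  qed
  then show "pw q (rotset m j {m - 1, u, v}) \<le> pw q {m - 1, u, v}" using rotset_mod by metis
qed

lemma strict3: fixes q m u v j :: nat assumes q3: "q \<ge> 3" and uv: "v < u" "u < m - 1"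
  and cu: "m - 1 - u + v < u \<or> (m - 1 - u + v = u \<and> m - 2 - u < v)"
  and cv: "m - 2 - v < u \<or> (m - 2 - v = u \<and> u - v - 1 < v)"
  and j: "0 < j" "j < m"
  shows "pw q (rotset m j {m - 1, u, v}) < pw q {m - 1, u, v}"
  using rot_cases3[OF uv j(2)]
proof (elim disjE conjE)
  assume "j = 0" then show ?thesis using j by simp
next
  assume r: "rotset m j {m - 1, u, v} = {m - 1, m - 1 - u + v, m - 2 - u}"
  have "pw q {m - 1, m - 1 - u + v, m - 2 - u} < pw q {m - 1, u, v}"
    by (rule lex3) (use q3 uv cu in auto)
  then show ?thesis using r by simp
next
  assume r: "rotset m j {m - 1, u, v} = {m - 1, m - 2 - v, u - v - 1}"
  have "pw q {m - 1, m - 2 - v, u - v - 1} < pw q {m - 1, u, v}"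
    by (rule lex3) (use q3 uv cv in auto)
  then show ?thesis using r by simp
next
  assume r: "rotset m j {m - 1, u, v} \<subseteq> {..<m - 1}"
  have "pw q (rotset m j {m - 1, u, v}) < q ^ (m - 1)" using pw_lt[OF q3 r] .
  moreover have "q ^ (m - 1) \<le> pw q {m - 1, u, v}" by (rule pw_elem) auto
  ultimately show ?thesis by simp
qed

lemma max1: fixes q m :: nat assumes q3: "q \<ge> 3" and m1: "m \<ge> 1" shows "maxrot q m {m - 1}"
  unfolding maxrot_def
proof
  fix j
  have "rotset m j {m - 1} = {(m - 1 + j) mod m}" unfolding rotset_def by simp
  moreover have "(m - 1 + j) mod m < m" using m1 by simp
  then have "(m - 1 + j) mod m \<le> m - 1" by linarith
  then have "q ^ ((m - 1 + j) mod m) \<le> q ^ (m - 1)" using q3 by (intro power_increasing) auto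
  ultimately show "pw q (rotset m j {m - 1}) \<le> pw q {m - 1}" by (simp add: pw_def)
qed

lemma kth3: fixes S :: "nat set" and d d1 d2 :: nat
  assumes fin: "finite S" and mem: "d \<in> S" "d1 \<in> S" "d2 \<in> S" and ord: "d < d2" "d2 < d1"
    and above: "\<forall>x\<in>S. d < x \<longrightarrow> x = d1 \<or> x = d2"
  shows "card S \<ge> 3 \<and> kth_largest 3 S = d"
proof -
  define S1 where "S1 = {x\<in>S. x < d}"
  have finS1: "finite S1" unfolding S1_def using fin by simp
  define L where "L = sorted_list_of_set S1 @ [d, d2, d1]"
  have setL: "set L = S"
  proof -
    have "S = S1 \<union> {d, d2, d1}"
    proof (rule set_eqI)
      fix x show "x \<in> S \<longleftrightarrow> x \<in> S1 \<union> {d, d2, d1}"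
        using above mem unfolding S1_def by (cases "x < d"; cases "x = d") auto
    qed
    then show ?thesis unfolding L_def using finS1 by simp
  qed
  have sortedL: "sorted L" unfolding L_def using finS1 ord
    by (auto simp: sorted_append S1_def)
  have distL: "distinct L" unfolding L_def using finS1 ord by (auto simp: S1_def)
  have "sorted_list_of_set S = L"
    by (rule sorted_distinct_set_unique) (use fin setL sortedL distL in auto)
  then have "kth_largest 3 S = rev L ! 2" unfolding kth_largest_def by simp
  also have "rev L = [d1, d2, d] @ rev (sorted_list_of_set S1)" unfolding L_def by simp
  finally have k: "kth_largest 3 S = d" by simp
  have "{d, d2, d1} \<subseteq> S" using mem by simp
  then have "card {d, d2, d1} \<le> card S" using fin by (rule card_mono[rotated])
  then have "card S \<ge> 3" using ord by simp
  then show ?thesis using k by simp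
qed

lemma N_even: fixes q m :: nat assumes "odd q" shows "even (q ^ m - 1)"
proof -
  have "odd (q ^ m)" using assms by simp
  then show ?thesis by (metis One_nat_def even_diff_nat odd_one odd_pos Suc_leI le_add_diff_inverse2 odd_add)
qed

lemma pos_N: fixes q m :: nat assumes "q \<ge> 3" "m \<ge> 1" shows "q ^ m - 1 \<ge> 2"
proof -
  have "q ^ 1 \<le> q ^ m" using assms by (intro power_increasing) auto
  then show ?thesis using assms by simp
qed

lemma odd_sub: fixes n y :: nat assumes "even n" "odd y" "y \<le> n" shows "odd (n - y)"
proof -
  have "n = (n - y) + y" using assms(3) by simp
  then have "even ((n - y) + y)" using assms(1) by simp
  then show ?thesis using assms(2) by simp
qed

lemma num_good: fixes q m y :: nat assumes q3: "q \<ge> 3" and oq: "odd q" and m1: "m \<ge> 1"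
  and y: "0 < y" "y < q ^ m - 1" "odd y" and mx: "\<forall>j. y * q ^ j mod (q ^ m - 1) \<le> y"
  shows "q ^ m - 1 - y \<in> odd_coset_leaders q (q ^ m - 1)"
proof -
  have q2: "q \<ge> 2" using q3 by simp
  have L: "is_coset_leader q (q ^ m - 1) (q ^ m - 1 - y)" using leader_y[OF q2 m1 y(1,2)] mx by simp
  have "even (q ^ m - 1)" using N_even[OF oq] .
  then have "odd (q ^ m - 1 - y)" using y by (intro odd_sub) auto
  then show ?thesis using L unfolding odd_coset_leaders_def by simp
qed

lemma num_card: fixes q m y :: nat assumes q3: "q \<ge> 3" and m1: "m \<ge> 1"
  and y: "0 < y" "y < q ^ m - 1" and st: "\<And>j. 0 < j \<Longrightarrow> j < m \<Longrightarrow> y * q ^ j mod (q ^ m - 1) < y"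
  shows "card (cyc_coset q (q ^ m - 1) (q ^ m - 1 - y)) = m"
proof (rule card_coset)
  show "1 \<le> q" "1 \<le> m" using q3 m1 by auto
  show "q ^ m - 1 - y < q ^ m - 1" using y by simp
  fix j assume j: "0 < j" "j < m"
  have q2: "q \<ge> 2" using q3 by simp
  have e: "(q ^ m - 1 - y) * q ^ j mod (q ^ m - 1) = q ^ m - 1 - (y * q ^ j mod (q ^ m - 1))"
    by (rule compl_rot[OF q2 m1 y])
  have "y * q ^ j mod (q ^ m - 1) < y" using st[OF j] .
  then show "(q ^ m - 1 - y) * q ^ j mod (q ^ m - 1) \<noteq> q ^ m - 1 - y" unfolding e using y by linarith
qed

lemma set_good: fixes q m :: nat and T :: "nat set" assumes q3: "q \<ge> 3" and oq: "odd q" and m1: "m \<ge> 1"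
  and T: "T \<subseteq> {..<m}" "odd (card T)" "maxrot q m T"
  shows "q ^ m - 1 - pw q T \<in> odd_coset_leaders q (q ^ m - 1)"
proof (rule num_good[OF q3 oq m1])
  have fin: "finite T" using T finite_subset by blast
  show "odd (pw q T)" using pw_parity[OF oq fin] T by simp
  then show "0 < pw q T" by (cases "pw q T") auto
  show "pw q T < q ^ m - 1" by (rule pw_ltN[OF q3 T(1) m1])
  show "\<forall>j. pw q T * q ^ j mod (q ^ m - 1) \<le> pw q T"
    using rot_pw[OF q3 m1 T(1)] T(3) unfolding maxrot_def by simp
qed

lemma from_S: fixes q m x :: nat assumes q3: "q \<ge> 3" and oq: "odd q" and m1: "m \<ge> 1"
  and x: "x \<in> odd_coset_leaders q (q ^ m - 1)"
  shows "0 < q ^ m - 1 - x \<and> q ^ m - 1 - x < q ^ m - 1 \<and> odd (q ^ m - 1 - x)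
     \<and> (\<forall>j. (q ^ m - 1 - x) * q ^ j mod (q ^ m - 1) \<le> q ^ m - 1 - x)
     \<and> x = q ^ m - 1 - (q ^ m - 1 - x)"
proof -
  have q2: "q \<ge> 2" using q3 by simp
  have lx: "is_coset_leader q (q ^ m - 1) x" and ox: "odd x" using x unfolding odd_coset_leaders_def by auto
  have xN: "x < q ^ m - 1" using lx unfolding is_coset_leader_def by simp
  have x0: "x > 0" using ox by (cases x) auto
  define y where "y = q ^ m - 1 - x"
  have y: "0 < y" "y < q ^ m - 1" using xN x0 unfolding y_def by auto
  have xy: "x = q ^ m - 1 - y" using xN unfolding y_def by simp
  have "\<forall>j. y * q ^ j mod (q ^ m - 1) \<le> y" using leader_y[OF q2 m1 y] lx xy by simp
  moreover have "odd y" using N_even[OF oq, of m] ox xN unfolding y_def by (intro odd_sub) auto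
  ultimately show ?thesis using y xy unfolding y_def by simp
qed

lemma to_set: fixes q m y :: nat assumes q3: "q \<ge> 3" and oq: "odd q" and m1: "m \<ge> 1"
  and y: "0 < y" "y < q ^ m - 1" "odd y" and mx: "\<forall>j. y * q ^ j mod (q ^ m - 1) \<le> y"
  and c1: "y div q ^ (m - 1) \<le> 1"
  obtains A where "A \<subseteq> {..<m}" "m - 1 \<in> A" "odd (card A)" "maxrot q m A" "y = pw q A"
proof -
  have q2: "q \<ge> 2" using q3 by simp
  have dig: "y div q ^ i mod q \<le> 1" if i: "i < m" for i
  proof -
    have "y div q ^ i mod q \<le> y div q ^ (m - 1)" by (rule digit_top[OF q2 y(2) i]) (use mx in blast)
    then show ?thesis using c1 by simp
  qed
  have ym: "y < q ^ m" using y by simp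
  define A where "A = {i. i < m \<and> y div q ^ i mod q = 1}"
  have yA: "y = pw q A" unfolding A_def by (rule zero_one_pw[OF q2 ym dig])
  have As: "A \<subseteq> {..<m}" unfolding A_def by auto
  have fin: "finite A" using As finite_subset by blast
  have "m - 1 \<in> A"
  proof (rule ccontr)
    assume "m - 1 \<notin> A"
    then have "y div q ^ (m - 1) mod q \<noteq> 1" unfolding A_def using m1 by simp
    moreover have "y div q ^ (m - 1) < q"
    proof -
      have "q ^ m = q * q ^ (m - 1)" using m1 by (cases m) auto
      then have "y < q * q ^ (m - 1)" using ym by simp
      then show ?thesis by (rule less_mult_imp_div_less)
    qed
    ultimately have c0: "y div q ^ (m - 1) = 0" using c1 by simp
    have "\<forall>i<m. y div q ^ i mod q = 0"
    proof (intro allI impI)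
      fix i assume "i < m"
      have "y div q ^ i mod q \<le> y div q ^ (m - 1)" by (rule digit_top[OF q2 y(2) \<open>i < m\<close>]) (use mx in blast)
      then show "y div q ^ i mod q = 0" using c0 by simp
    qed
    then have "A = {}" unfolding A_def by auto
    then show False using yA y by simp
  qed
  moreover have "odd (card A)" using pw_parity[OF oq fin] yA y by simp
  moreover have "maxrot q m A" unfolding maxrot_def using rot_pw[OF q3 m1 As] mx yA by metis
  ultimately show ?thesis using that As yA by blast
qed

lemma final: fixes q m :: nat and Y1 Y2 Y3 :: nat
  assumes q3: "q \<ge> 3" and oq: "odd q" and m1: "m \<ge> 1"
  and ord: "Y1 < Y2" "Y2 < Y3" "Y3 < q ^ m - 1"
  and mem: "q ^ m - 1 - Y1 \<in> odd_coset_leaders q (q ^ m - 1)"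
    "q ^ m - 1 - Y2 \<in> odd_coset_leaders q (q ^ m - 1)"
    "q ^ m - 1 - Y3 \<in> odd_coset_leaders q (q ^ m - 1)"
  and cc: "card (cyc_coset q (q ^ m - 1) (q ^ m - 1 - Y3)) = m"
  and cl: "\<And>y. 0 < y \<Longrightarrow> y < q ^ m - 1 \<Longrightarrow> odd y \<Longrightarrow> (\<forall>j. y * q ^ j mod (q ^ m - 1) \<le> y) \<Longrightarrow> y < Y3
      \<Longrightarrow> y = Y1 \<or> y = Y2"
  shows "card (odd_coset_leaders q (q ^ m - 1)) \<ge> 3
    \<and> kth_largest 3 (odd_coset_leaders q (q ^ m - 1)) = q ^ m - 1 - Y3
    \<and> card (cyc_coset q (q ^ m - 1) (kth_largest 3 (odd_coset_leaders q (q ^ m - 1)))) = m"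
proof -
  let ?S = "odd_coset_leaders q (q ^ m - 1)"
  have fin: "finite ?S"
  proof (rule finite_subset)
    show "?S \<subseteq> {..<q ^ m - 1}" unfolding odd_coset_leaders_def is_coset_leader_def by auto
  qed simp
  have above: "\<forall>x\<in>?S. q ^ m - 1 - Y3 < x \<longrightarrow> x = q ^ m - 1 - Y1 \<or> x = q ^ m - 1 - Y2"
  proof (intro ballI impI)
    fix x assume x: "x \<in> ?S" and gt: "q ^ m - 1 - Y3 < x"
    have f: "0 < q ^ m - 1 - x \<and> q ^ m - 1 - x < q ^ m - 1 \<and> odd (q ^ m - 1 - x)
     \<and> (\<forall>j. (q ^ m - 1 - x) * q ^ j mod (q ^ m - 1) \<le> q ^ m - 1 - x)
     \<and> x = q ^ m - 1 - (q ^ m - 1 - x)" by (rule from_S[OF q3 oq m1 x])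
    have "q ^ m - 1 - x < Y3" using gt f by linarith
    then have "q ^ m - 1 - x = Y1 \<or> q ^ m - 1 - x = Y2" using cl f by blast
    then show "x = q ^ m - 1 - Y1 \<or> x = q ^ m - 1 - Y2" using f by auto
  qed
  have k: "card ?S \<ge> 3 \<and> kth_largest 3 ?S = q ^ m - 1 - Y3"
    by (rule kth3[OF fin mem(3) mem(1) mem(2)]) (use ord above in auto)
  then show ?thesis using cc by simp
qed

lemma smallY: fixes q m :: nat assumes q3: "q \<ge> 3" and m2: "m \<ge> 2"
  shows "2 * q ^ (m - 1) + 1 < q ^ m - 1"
    and "\<And>j. 0 < j \<Longrightarrow> j < m \<Longrightarrow> (2 * q ^ (m - 1) + 1) * q ^ j mod (q ^ m - 1) < 2 * q ^ (m - 1) + 1"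
proof -
  have qm: "q ^ m = q * q ^ (m - 1)" using m2 by (cases m) auto
  have "q ^ 1 \<le> q ^ (m - 1)" using q3 m2 by (intro power_increasing) auto
  then have "q ^ (m - 1) \<ge> 3" using q3 by simp
  moreover have "3 * q ^ (m - 1) \<le> q * q ^ (m - 1)" using q3 by simp
  ultimately show lt: "2 * q ^ (m - 1) + 1 < q ^ m - 1" using qm by linarith
  fix j assume j: "0 < j" "j < m"
  define k where "k = m - j"
  have k1: "k \<ge> 1" unfolding k_def using j by simp
  have mk: "m - 1 = (j - 1) + k" unfolding k_def using j by simp
  have qk: "q ^ k \<ge> 3"
  proof -
    have "q ^ 1 \<le> q ^ k" using q3 k1 by (intro power_increasing) auto
    then show ?thesis using q3 by simp
  qed
  have ye: "2 * q ^ (m - 1) + 1 = (2 * q ^ (j - 1)) * q ^ k + 1" unfolding mk by (simp add: power_add)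
  have ymod: "(2 * q ^ (m - 1) + 1) mod q ^ k = 1"
  proof -
    have "((2 * q ^ (j - 1)) * q ^ k + 1) mod q ^ k = 1 mod q ^ k" by (rule mod_mult_self3)
    also have "1 mod q ^ k = (1::nat)" using qk by (intro mod_less) linarith
    finally show ?thesis unfolding ye .
  qed
  have ydiv: "(2 * q ^ (m - 1) + 1) div q ^ k = 2 * q ^ (j - 1)"
  proof -
    have "((2 * q ^ (j - 1)) * q ^ k + 1) div q ^ k = 2 * q ^ (j - 1) + 1 div q ^ k"
      by (rule div_mult_self3) (use qk in linarith)
    also have "1 div q ^ k = (0::nat)" using qk by (intro div_less) linarith
    finally show ?thesis unfolding ye by simp
  qed
  have "(2 * q ^ (m - 1) + 1) * q ^ j mod (q ^ m - 1) = 1 * q ^ j + 2 * q ^ (j - 1)"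
    using rot_formula[of q "2 * q ^ (m - 1) + 1" m j] q3 lt j ymod ydiv unfolding k_def by simp
  also have "\<dots> \<le> 2 * q ^ j"
  proof -
    have "q ^ j = q * q ^ (j - 1)" using j by (cases j) auto
    then show ?thesis using q3 by simp
  qed
  also have "\<dots> \<le> 2 * q ^ (m - 1)" using q3 j by (simp add: power_increasing)
  finally show "(2 * q ^ (m - 1) + 1) * q ^ j mod (q ^ m - 1) < 2 * q ^ (m - 1) + 1" by simp
qed

lemma top_le1: fixes q m a b y :: nat assumes q3: "q \<ge> 3" and oq: "odd q" and m2: "m \<ge> 2"
  and lt: "y < q ^ (m - 1) + q ^ a + q ^ b" and ba: "b < a" and am: "a \<le> m - 1"
  and am1: "a = m - 1 \<Longrightarrow> b = 0" and oy: "odd y"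
  shows "y div q ^ (m - 1) \<le> 1"
proof (rule ccontr)
  assume "\<not> ?thesis"
  then have "2 \<le> y div q ^ (m - 1)" by simp
  then have "2 * q ^ (m - 1) \<le> y div q ^ (m - 1) * q ^ (m - 1)" by (rule mult_right_mono) simp
  also have "\<dots> \<le> y" by (rule div_times_less_eq_dividend)
  finally have y2: "2 * q ^ (m - 1) \<le> y" .
  show False
  proof (cases "a = m - 1")
    case True
    then have "b = 0" by (rule am1)
    then have "y = 2 * q ^ (m - 1)" using lt y2 True by simp
    then show False using oy by simp
  next
    case False
    then have a2: "a + 1 \<le> m - 1" using am by simp
    have "q ^ b < q ^ a" using q3 ba by (intro power_strict_increasing) auto
    moreover have "q ^ (a + 1) \<le> q ^ (m - 1)" using q3 a2 by (intro power_increasing) auto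
    moreover have "q ^ (a + 1) \<ge> 2 * q ^ a" using q3 by simp
    ultimately show False using lt y2 by linarith
  qed
qed

lemma classify_num: fixes q m a b y :: nat and A2 :: "nat set"
  assumes q3: "q \<ge> 3" and oq: "odd q" and m2: "m \<ge> 2"
  and ba: "b < a" and am: "a \<le> m - 1" and am1: "a = m - 1 \<Longrightarrow> b = 0"
  and cls: "\<And>A. A \<subseteq> {..<m} \<Longrightarrow> m - 1 \<in> A \<Longrightarrow> odd (card A) \<Longrightarrow> maxrot q m A
     \<Longrightarrow> pw q A < q ^ (m - 1) + q ^ a + q ^ b \<Longrightarrow> A = {m - 1} \<or> A = A2"
  and y: "0 < y" "y < q ^ m - 1" "odd y" and mx: "\<forall>j. y * q ^ j mod (q ^ m - 1) \<le> y"
  and lt: "y < q ^ (m - 1) + q ^ a + q ^ b"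
  shows "y = pw q {m - 1} \<or> y = pw q A2"
proof -
  have m1: "m \<ge> 1" using m2 by simp
  have c1: "y div q ^ (m - 1) \<le> 1" by (rule top_le1[OF q3 oq m2 lt ba am am1 y(3)])
  obtain A where A: "A \<subseteq> {..<m}" "m - 1 \<in> A" "odd (card A)" "maxrot q m A" "y = pw q A"
    by (rule to_set[OF q3 oq m1 y mx c1])
  have "A = {m - 1} \<or> A = A2" by (rule cls[OF A(1-4)]) (use A(5) lt in simp)
  then show ?thesis using A(5) by auto
qed

lemma set_card: fixes q m :: nat and T :: "nat set" assumes q3: "q \<ge> 3" and m1: "m \<ge> 1"
  and T: "T \<subseteq> {..<m}" "T \<noteq> {}"
  and st: "\<And>j. 0 < j \<Longrightarrow> j < m \<Longrightarrow> pw q (rotset m j T) < pw q T"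
  shows "card (cyc_coset q (q ^ m - 1) (q ^ m - 1 - pw q T)) = m"
proof (rule num_card[OF q3 m1])
  have fin: "finite T" using T finite_subset by blast
  obtain t where "t \<in> T" using T by blast
  then have "q ^ t \<le> pw q T" using fin by (intro pw_elem)
  then show "0 < pw q T" using q3 by (meson le_less_trans zero_less_power less_le_trans zero_less_numeral order.strict_trans2)
  show "pw q T < q ^ m - 1" by (rule pw_ltN[OF q3 T(1) m1])
  fix j assume "0 < j" "j < m"
  then show "pw q T * q ^ j mod (q ^ m - 1) < pw q T" using st rot_pw[OF q3 m1 T(1)] by simp
qed

lemma card3: "v < u \<Longrightarrow> u < w \<Longrightarrow> card {w, u, (v::nat)} = 3" by simp

lemma Yset_mem: fixes q m u v :: nat assumes q3: "q \<ge> 3" and oq: "odd q" and uv: "v < u" "u < m - 1"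
  and cu: "(m - 1 - u + v < u \<or> (m - 1 - u + v = u \<and> m - 2 - u < v)) \<or> (m - 1 - u + v = u \<and> m - 2 - u = v)"
  and cv: "(m - 2 - v < u \<or> (m - 2 - v = u \<and> u - v - 1 < v)) \<or> (m - 2 - v = u \<and> u - v - 1 = v)"
  shows "q ^ m - 1 - pw q {m - 1, u, v} \<in> odd_coset_leaders q (q ^ m - 1)"
proof (rule set_good[OF q3 oq])
  show "m \<ge> 1" using uv by simp
  show "{m - 1, u, v} \<subseteq> {..<m}" using uv by auto
  show "odd (card {m - 1, u, v})" using uv by simp
  show "maxrot q m {m - 1, u, v}" by (rule max3[OF q3 uv cu cv])
qed

lemma Yset_strict: fixes q m u v :: nat assumes q3: "q \<ge> 3" and oq: "odd q" and uv: "v < u" "u < m - 1"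
  and cu: "m - 1 - u + v < u \<or> (m - 1 - u + v = u \<and> m - 2 - u < v)"
  and cv: "m - 2 - v < u \<or> (m - 2 - v = u \<and> u - v - 1 < v)"
  shows "q ^ m - 1 - pw q {m - 1, u, v} \<in> odd_coset_leaders q (q ^ m - 1)"
    "card (cyc_coset q (q ^ m - 1) (q ^ m - 1 - pw q {m - 1, u, v})) = m"
    "pw q {m - 1, u, v} < q ^ m - 1"
proof -
  show "q ^ m - 1 - pw q {m - 1, u, v} \<in> odd_coset_leaders q (q ^ m - 1)"
    by (rule Yset_mem[OF q3 oq uv]) (use cu cv in auto)
  show "card (cyc_coset q (q ^ m - 1) (q ^ m - 1 - pw q {m - 1, u, v})) = m"
  proof (rule set_card[OF q3])
    show "m \<ge> 1" using uv by simp
    show "{m - 1, u, v} \<subseteq> {..<m}" using uv by auto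
    show "{m - 1, u, v} \<noteq> {}" by simp
    fix j assume "0 < j" "j < m"
    then show "pw q (rotset m j {m - 1, u, v}) < pw q {m - 1, u, v}"
      by (intro strict3[OF q3 uv cu cv])
  qed
  show "pw q {m - 1, u, v} < q ^ m - 1" by (rule pw_ltN[OF q3]) (use uv in auto)
qed

lemma Ysmall: fixes q m :: nat assumes q3: "q \<ge> 3" and oq: "odd q" and m2: "m \<ge> 2"
  shows "q ^ m - 1 - (2 * q ^ (m - 1) + 1) \<in> odd_coset_leaders q (q ^ m - 1)"
    "card (cyc_coset q (q ^ m - 1) (q ^ m - 1 - (2 * q ^ (m - 1) + 1))) = m"
    "2 * q ^ (m - 1) + 1 < q ^ m - 1"
proof -
  have m1: "m \<ge> 1" using m2 by simp
  have lt: "2 * q ^ (m - 1) + 1 < q ^ m - 1" by (rule smallY(1)[OF q3 m2])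
  have st: "\<And>j. 0 < j \<Longrightarrow> j < m \<Longrightarrow> (2 * q ^ (m - 1) + 1) * q ^ j mod (q ^ m - 1) < 2 * q ^ (m - 1) + 1"
    by (rule smallY(2)[OF q3 m2])
  show "q ^ m - 1 - (2 * q ^ (m - 1) + 1) \<in> odd_coset_leaders q (q ^ m - 1)"
  proof (rule num_good[OF q3 oq m1])
    show "0 < 2 * q ^ (m - 1) + 1" "odd (2 * q ^ (m - 1) + 1)" by simp_all
    show "2 * q ^ (m - 1) + 1 < q ^ m - 1" by (rule lt)
    show "\<forall>j. (2 * q ^ (m - 1) + 1) * q ^ j mod (q ^ m - 1) \<le> 2 * q ^ (m - 1) + 1"
    proof
      fix j show "(2 * q ^ (m - 1) + 1) * q ^ j mod (q ^ m - 1) \<le> 2 * q ^ (m - 1) + 1"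
        by (rule maxrot_all) (use q3 m1 lt st less_imp_le in auto)
    qed
  qed
  show "card (cyc_coset q (q ^ m - 1) (q ^ m - 1 - (2 * q ^ (m - 1) + 1))) = m"
    by (rule num_card[OF q3 m1]) (use lt st in auto)
  show "2 * q ^ (m - 1) + 1 < q ^ m - 1" by (rule lt)
qed

lemma Y1_mem: fixes q m :: nat assumes q3: "q \<ge> 3" and oq: "odd q" and m1: "m \<ge> 1"
  shows "q ^ m - 1 - q ^ (m - 1) \<in> odd_coset_leaders q (q ^ m - 1)"
proof -
  have "q ^ m - 1 - pw q {m - 1} \<in> odd_coset_leaders q (q ^ m - 1)"
    by (rule set_good[OF q3 oq m1]) (use m1 max1[OF q3 m1] in auto)
  then show ?thesis by (simp add: pw_def)
qed

lemma case0: fixes q m j :: nat assumes q3: "q \<ge> 3" and oq: "odd q" and mj: "m = 3 * j" "j \<ge> 1"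
  shows "card (odd_coset_leaders q (q ^ m - 1)) \<ge> 3
    \<and> kth_largest 3 (odd_coset_leaders q (q ^ m - 1)) = q ^ m - 1 - (q ^ (m - 1) + q ^ (2 * j) + q ^ (j - 1))
    \<and> card (cyc_coset q (q ^ m - 1) (kth_largest 3 (odd_coset_leaders q (q ^ m - 1)))) = m"
proof -
  have m1: "m \<ge> 1" and m2: "m \<ge> 2" using mj by auto
  define Y3 where "Y3 = q ^ (m - 1) + q ^ (2 * j) + q ^ (j - 1)"
  have Y3p: "q ^ m - 1 - Y3 \<in> odd_coset_leaders q (q ^ m - 1)
     \<and> card (cyc_coset q (q ^ m - 1) (q ^ m - 1 - Y3)) = m \<and> Y3 < q ^ m - 1"
  proof (cases "j = 1")
    case True
    then have "Y3 = 2 * q ^ (m - 1) + 1" unfolding Y3_def using mj by simp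
    then show ?thesis using Ysmall[OF q3 oq m2] by simp
  next
    case False
    then have j2: "j \<ge> 2" using mj by simp
    have e: "Y3 = pw q {m - 1, 2 * j, j - 1}" unfolding Y3_def using mj j2 by (subst pw3) auto
    have "j - 1 < 2 * j" "2 * j < m - 1" using mj j2 by auto
    note S = Yset_strict[OF q3 oq this]
    have c1: "m - 1 - 2 * j + (j - 1) < 2 * j \<or> (m - 1 - 2 * j + (j - 1) = 2 * j \<and> m - 2 - 2 * j < j - 1)"
      using mj j2 by arith
    have c2: "m - 2 - (j - 1) < 2 * j \<or> (m - 2 - (j - 1) = 2 * j \<and> 2 * j - (j - 1) - 1 < j - 1)"
      using mj j2 by arith
    show ?thesis using S[OF c1 c2] e by simp
  qed
  define A2 where "A2 = {m - 1, 2 * j - 1, j - 1}"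
  have A2e: "pw q A2 = q ^ (m - 1) + q ^ (2 * j - 1) + q ^ (j - 1)" unfolding A2_def using mj by (subst pw3) auto
  have A2m: "q ^ m - 1 - pw q A2 \<in> odd_coset_leaders q (q ^ m - 1)" unfolding A2_def
  proof (rule Yset_mem[OF q3 oq])
    show "j - 1 < 2 * j - 1" "2 * j - 1 < m - 1" using mj by auto
    show "(m - 1 - (2 * j - 1) + (j - 1) < 2 * j - 1 \<or> (m - 1 - (2 * j - 1) + (j - 1) = 2 * j - 1 \<and> m - 2 - (2 * j - 1) < j - 1))
      \<or> (m - 1 - (2 * j - 1) + (j - 1) = 2 * j - 1 \<and> m - 2 - (2 * j - 1) = j - 1)" using mj by arith
    show "(m - 2 - (j - 1) < 2 * j - 1 \<or> (m - 2 - (j - 1) = 2 * j - 1 \<and> 2 * j - 1 - (j - 1) - 1 < j - 1))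
      \<or> (m - 2 - (j - 1) = 2 * j - 1 \<and> 2 * j - 1 - (j - 1) - 1 = j - 1)" using mj by arith
  qed
  have o1: "q ^ (m - 1) < pw q A2" unfolding A2e using q3 by simp
  have o2: "pw q A2 < Y3" unfolding A2e Y3_def using q3 mj by (simp add: power_strict_increasing)
  have res: "card (odd_coset_leaders q (q ^ m - 1)) \<ge> 3
    \<and> kth_largest 3 (odd_coset_leaders q (q ^ m - 1)) = q ^ m - 1 - Y3
    \<and> card (cyc_coset q (q ^ m - 1) (kth_largest 3 (odd_coset_leaders q (q ^ m - 1)))) = m"
  proof (rule final[OF q3 oq m1 o1 o2])
    show "Y3 < q ^ m - 1" "q ^ m - 1 - Y3 \<in> odd_coset_leaders q (q ^ m - 1)"
      "card (cyc_coset q (q ^ m - 1) (q ^ m - 1 - Y3)) = m" using Y3p by auto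
    show "q ^ m - 1 - q ^ (m - 1) \<in> odd_coset_leaders q (q ^ m - 1)" by (rule Y1_mem[OF q3 oq m1])
    show "q ^ m - 1 - pw q A2 \<in> odd_coset_leaders q (q ^ m - 1)" by (rule A2m)
    fix y assume y: "0 < y" "y < q ^ m - 1" "odd y" "\<forall>j. y * q ^ j mod (q ^ m - 1) \<le> y" "y < Y3"
    have "y = pw q {m - 1} \<or> y = pw q A2"
    proof (rule classify_num[OF q3 oq m2, of "j - 1" "2 * j"])
      show "j - 1 < 2 * j" "2 * j \<le> m - 1" using mj by auto
      show "2 * j = m - 1 \<Longrightarrow> j - 1 = 0" using mj by simp
      show "y < q ^ (m - 1) + q ^ (2 * j) + q ^ (j - 1)" using y Y3_def by simp
      fix A assume "A \<subseteq> {..<m}" "m - 1 \<in> A" "odd (card A)" "maxrot q m A"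
        "pw q A < q ^ (m - 1) + q ^ (2 * j) + q ^ (j - 1)"
      then show "A = {m - 1} \<or> A = A2" unfolding A2_def using classify0[OF mj q3] by blast
    qed (use y in auto)
    then show "y = q ^ (m - 1) \<or> y = pw q A2" by (simp add: pw_def)
  qed
  then show ?thesis unfolding Y3_def .
qed

lemma case1: fixes q m j :: nat assumes q3: "q \<ge> 3" and oq: "odd q" and mj: "m = 3 * j + 1" "j \<ge> 1"
  shows "card (odd_coset_leaders q (q ^ m - 1)) \<ge> 3
    \<and> kth_largest 3 (odd_coset_leaders q (q ^ m - 1)) = q ^ m - 1 - (q ^ (m - 1) + q ^ (2 * j + 1) + q ^ (j - 1))
    \<and> card (cyc_coset q (q ^ m - 1) (kth_largest 3 (odd_coset_leaders q (q ^ m - 1)))) = m"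
proof -
  have m1: "m \<ge> 1" and m2: "m \<ge> 2" using mj by auto
  define Y3 where "Y3 = q ^ (m - 1) + q ^ (2 * j + 1) + q ^ (j - 1)"
  have Y3p: "q ^ m - 1 - Y3 \<in> odd_coset_leaders q (q ^ m - 1)
     \<and> card (cyc_coset q (q ^ m - 1) (q ^ m - 1 - Y3)) = m \<and> Y3 < q ^ m - 1"
  proof (cases "j = 1")
    case True
    then have "Y3 = 2 * q ^ (m - 1) + 1" unfolding Y3_def using mj by simp
    then show ?thesis using Ysmall[OF q3 oq m2] by simp
  next
    case False
    then have j2: "j \<ge> 2" using mj by simp
    have e: "Y3 = pw q {m - 1, 2 * j + 1, j - 1}" unfolding Y3_def using mj j2 by (subst pw3) auto
    have "j - 1 < 2 * j + 1" "2 * j + 1 < m - 1" using mj j2 by auto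
    note S = Yset_strict[OF q3 oq this]
    have c1: "m - 1 - (2 * j + 1) + (j - 1) < 2 * j + 1 \<or> (m - 1 - (2 * j + 1) + (j - 1) = 2 * j + 1 \<and> m - 2 - (2 * j + 1) < j - 1)"
      using mj j2 by arith
    have c2: "m - 2 - (j - 1) < 2 * j + 1 \<or> (m - 2 - (j - 1) = 2 * j + 1 \<and> 2 * j + 1 - (j - 1) - 1 < j - 1)"
      using mj j2 by arith
    show ?thesis using S[OF c1 c2] e by simp
  qed
  define A2 where "A2 = {m - 1, 2 * j, j}"
  have A2e: "pw q A2 = q ^ (m - 1) + q ^ (2 * j) + q ^ j" unfolding A2_def using mj by (subst pw3) auto
  have A2m: "q ^ m - 1 - pw q A2 \<in> odd_coset_leaders q (q ^ m - 1)" unfolding A2_def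
  proof (rule Yset_mem[OF q3 oq])
    show "j < 2 * j" "2 * j < m - 1" using mj by auto
    show "(m - 1 - (2 * j) + j < 2 * j \<or> (m - 1 - (2 * j) + j = 2 * j \<and> m - 2 - (2 * j) < j))
      \<or> (m - 1 - (2 * j) + j = 2 * j \<and> m - 2 - (2 * j) = j)" using mj by arith
    show "(m - 2 - j < 2 * j \<or> (m - 2 - j = 2 * j \<and> 2 * j - j - 1 < j))
      \<or> (m - 2 - j = 2 * j \<and> 2 * j - j - 1 = j)" using mj by arith
  qed
  have o1: "q ^ (m - 1) < pw q A2" unfolding A2e using q3 by simp
  have o2: "pw q A2 < Y3"
  proof -
    have "q ^ j \<le> q ^ (2 * j)" using q3 by (intro power_increasing) auto
    moreover have "q ^ (2 * j + 1) \<ge> 3 * q ^ (2 * j)" using q3 by simp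
    moreover have "q ^ (2 * j) > 0" using q3 by simp
    ultimately show ?thesis unfolding A2e Y3_def by linarith
  qed
  have res: "card (odd_coset_leaders q (q ^ m - 1)) \<ge> 3
    \<and> kth_largest 3 (odd_coset_leaders q (q ^ m - 1)) = q ^ m - 1 - Y3
    \<and> card (cyc_coset q (q ^ m - 1) (kth_largest 3 (odd_coset_leaders q (q ^ m - 1)))) = m"
  proof (rule final[OF q3 oq m1 o1 o2])
    show "Y3 < q ^ m - 1" "q ^ m - 1 - Y3 \<in> odd_coset_leaders q (q ^ m - 1)"
      "card (cyc_coset q (q ^ m - 1) (q ^ m - 1 - Y3)) = m" using Y3p by auto
    show "q ^ m - 1 - q ^ (m - 1) \<in> odd_coset_leaders q (q ^ m - 1)" by (rule Y1_mem[OF q3 oq m1])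
    show "q ^ m - 1 - pw q A2 \<in> odd_coset_leaders q (q ^ m - 1)" by (rule A2m)
    fix y assume y: "0 < y" "y < q ^ m - 1" "odd y" "\<forall>j. y * q ^ j mod (q ^ m - 1) \<le> y" "y < Y3"
    have "y = pw q {m - 1} \<or> y = pw q A2"
    proof (rule classify_num[OF q3 oq m2, of "j - 1" "2 * j + 1"])
      show "j - 1 < 2 * j + 1" "2 * j + 1 \<le> m - 1" using mj by auto
      show "2 * j + 1 = m - 1 \<Longrightarrow> j - 1 = 0" using mj by simp
      show "y < q ^ (m - 1) + q ^ (2 * j + 1) + q ^ (j - 1)" using y Y3_def by simp
      fix A assume "A \<subseteq> {..<m}" "m - 1 \<in> A" "odd (card A)" "maxrot q m A"
        "pw q A < q ^ (m - 1) + q ^ (2 * j + 1) + q ^ (j - 1)"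
      then show "A = {m - 1} \<or> A = A2" unfolding A2_def using classify1[OF mj q3] by blast
    qed (use y in auto)
    then show "y = q ^ (m - 1) \<or> y = pw q A2" by (simp add: pw_def)
  qed
  then show ?thesis unfolding Y3_def .
qed

lemma case2: fixes q m j :: nat assumes q3: "q \<ge> 3" and oq: "odd q" and mj: "m = 3 * j + 2" "j \<ge> 1"
  shows "card (odd_coset_leaders q (q ^ m - 1)) \<ge> 3
    \<and> kth_largest 3 (odd_coset_leaders q (q ^ m - 1)) = q ^ m - 1 - (q ^ (m - 1) + q ^ (2 * j + 1) + q ^ (j + 1))
    \<and> card (cyc_coset q (q ^ m - 1) (kth_largest 3 (odd_coset_leaders q (q ^ m - 1)))) = m"
proof -
  have m1: "m \<ge> 1" and m2: "m \<ge> 2" using mj by auto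
  define Y3 where "Y3 = q ^ (m - 1) + q ^ (2 * j + 1) + q ^ (j + 1)"
  have Y3p: "q ^ m - 1 - Y3 \<in> odd_coset_leaders q (q ^ m - 1)
     \<and> card (cyc_coset q (q ^ m - 1) (q ^ m - 1 - Y3)) = m \<and> Y3 < q ^ m - 1"
  proof -
    have e: "Y3 = pw q {m - 1, 2 * j + 1, j + 1}" unfolding Y3_def using mj by (subst pw3) auto
    have "j + 1 < 2 * j + 1" "2 * j + 1 < m - 1" using mj by auto
    note S = Yset_strict[OF q3 oq this]
    have c1: "m - 1 - (2 * j + 1) + (j + 1) < 2 * j + 1 \<or> (m - 1 - (2 * j + 1) + (j + 1) = 2 * j + 1 \<and> m - 2 - (2 * j + 1) < j + 1)"
      using mj by arith
    have c2: "m - 2 - (j + 1) < 2 * j + 1 \<or> (m - 2 - (j + 1) = 2 * j + 1 \<and> 2 * j + 1 - (j + 1) - 1 < j + 1)"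
      using mj by arith
    show ?thesis using S[OF c1 c2] e by simp
  qed
  define A2 where "A2 = {m - 1, 2 * j + 1, j}"
  have A2e: "pw q A2 = q ^ (m - 1) + q ^ (2 * j + 1) + q ^ j" unfolding A2_def using mj by (subst pw3) auto
  have A2m: "q ^ m - 1 - pw q A2 \<in> odd_coset_leaders q (q ^ m - 1)" unfolding A2_def
  proof (rule Yset_mem[OF q3 oq])
    show "j < 2 * j + 1" "2 * j + 1 < m - 1" using mj by auto
    show "(m - 1 - (2 * j + 1) + j < 2 * j + 1 \<or> (m - 1 - (2 * j + 1) + j = 2 * j + 1 \<and> m - 2 - (2 * j + 1) < j))
      \<or> (m - 1 - (2 * j + 1) + j = 2 * j + 1 \<and> m - 2 - (2 * j + 1) = j)" using mj by arith
    show "(m - 2 - j < 2 * j + 1 \<or> (m - 2 - j = 2 * j + 1 \<and> 2 * j + 1 - j - 1 < j))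
      \<or> (m - 2 - j = 2 * j + 1 \<and> 2 * j + 1 - j - 1 = j)" using mj by arith
  qed
  have o1: "q ^ (m - 1) < pw q A2" unfolding A2e using q3 by simp
  have o2: "pw q A2 < Y3" unfolding A2e Y3_def using q3 mj by (simp add: power_strict_increasing)
  have res: "card (odd_coset_leaders q (q ^ m - 1)) \<ge> 3
    \<and> kth_largest 3 (odd_coset_leaders q (q ^ m - 1)) = q ^ m - 1 - Y3
    \<and> card (cyc_coset q (q ^ m - 1) (kth_largest 3 (odd_coset_leaders q (q ^ m - 1)))) = m"
  proof (rule final[OF q3 oq m1 o1 o2])
    show "Y3 < q ^ m - 1" "q ^ m - 1 - Y3 \<in> odd_coset_leaders q (q ^ m - 1)"
      "card (cyc_coset q (q ^ m - 1) (q ^ m - 1 - Y3)) = m" using Y3p by auto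
    show "q ^ m - 1 - q ^ (m - 1) \<in> odd_coset_leaders q (q ^ m - 1)" by (rule Y1_mem[OF q3 oq m1])
    show "q ^ m - 1 - pw q A2 \<in> odd_coset_leaders q (q ^ m - 1)" by (rule A2m)
    fix y assume y: "0 < y" "y < q ^ m - 1" "odd y" "\<forall>j. y * q ^ j mod (q ^ m - 1) \<le> y" "y < Y3"
    have "y = pw q {m - 1} \<or> y = pw q A2"
    proof (rule classify_num[OF q3 oq m2, of "j + 1" "2 * j + 1"])
      show "j + 1 < 2 * j + 1" "2 * j + 1 \<le> m - 1" using mj by auto
      show "2 * j + 1 = m - 1 \<Longrightarrow> j + 1 = 0" using mj by simp
      show "y < q ^ (m - 1) + q ^ (2 * j + 1) + q ^ (j + 1)" using y Y3_def by simp
      fix A assume "A \<subseteq> {..<m}" "m - 1 \<in> A" "odd (card A)" "maxrot q m A"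
        "pw q A < q ^ (m - 1) + q ^ (2 * j + 1) + q ^ (j + 1)"
      then show "A = {m - 1} \<or> A = A2" unfolding A2_def using classify2[OF mj q3] by blast
    qed (use y in auto)
    then show "y = q ^ (m - 1) \<or> y = pw q A2" by (simp add: pw_def)
  qed
  then show ?thesis unfolding Y3_def .
qed

lemma case_m2: fixes q m :: nat assumes q5: "q \<ge> 5" and oq: "odd q" and m2: "m = 2"
  shows "card (odd_coset_leaders q (q ^ m - 1)) \<ge> 3
    \<and> kth_largest 3 (odd_coset_leaders q (q ^ m - 1)) = q ^ m - 1 - (3 * q)
    \<and> card (cyc_coset q (q ^ m - 1) (kth_largest 3 (odd_coset_leaders q (q ^ m - 1)))) = m"
proof -
  have q3: "q \<ge> 3" and q2: "q \<ge> 2" using q5 by auto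
  have m1: "m \<ge> 1" using m2 by simp
  have N: "q ^ m - 1 = q * q - 1" using m2 by (simp add: power2_eq_square)
  have "5 * q \<le> q * q" using q5 by simp
  then have Nbig: "3 * q < q ^ m - 1" unfolding N using q5 by linarith
  have rot1: "y * q ^ 1 mod (q ^ m - 1) = (y mod q) * q + y div q" if "y < q ^ m - 1" for y
    using rot_formula[OF q2 that, of 1] m2 by simp
  have mx_all: "\<forall>j. y * q ^ j mod (q ^ m - 1) \<le> y" if "y < q ^ m - 1" "(y mod q) * q + y div q \<le> y" for y
  proof
    fix j show "y * q ^ j mod (q ^ m - 1) \<le> y"
    proof (rule maxrot_all)
      show "1 \<le> q" "1 \<le> m" "y < q ^ m - 1" using q3 m1 that by auto
      fix i assume "0 < i" "i < m"
      then have "i = 1" using m2 by simp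
      then show "y * q ^ i mod (q ^ m - 1) \<le> y" using rot1[OF that(1)] that(2) by simp
    qed
  qed
  have d3: "(3 * q) mod q = 0" "(3 * q) div q = 3" using q3 by auto
  have d2: "(2 * q + 1) mod q = 1" "(2 * q + 1) div q = 2"
  proof -
    have "(2 * q + 1) mod q = 1 mod q" by (rule mod_mult_self3)
    then show "(2 * q + 1) mod q = 1" using q3 by simp
    have "(2 * q + 1) div q = 2 + 1 div q" by (rule div_mult_self3) (use q3 in simp)
    then show "(2 * q + 1) div q = 2" using q3 by simp
  qed
  show ?thesis
  proof -
    have res: "card (odd_coset_leaders q (q ^ m - 1)) \<ge> 3
      \<and> kth_largest 3 (odd_coset_leaders q (q ^ m - 1)) = q ^ m - 1 - (3 * q)
      \<and> card (cyc_coset q (q ^ m - 1) (kth_largest 3 (odd_coset_leaders q (q ^ m - 1)))) = m"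
    proof (rule final[OF q3 oq m1, of "q ^ (m - 1)" "2 * q + 1" "3 * q"])
      show "q ^ (m - 1) < 2 * q + 1" "2 * q + 1 < 3 * q" "3 * q < q ^ m - 1" using m2 q3 Nbig by auto
      show "q ^ m - 1 - q ^ (m - 1) \<in> odd_coset_leaders q (q ^ m - 1)" by (rule Y1_mem[OF q3 oq m1])
      show "q ^ m - 1 - (2 * q + 1) \<in> odd_coset_leaders q (q ^ m - 1)"
      proof (rule num_good[OF q3 oq m1])
        show "0 < 2 * q + 1" "odd (2 * q + 1)" by auto
        show "2 * q + 1 < q ^ m - 1" using Nbig q3 by linarith
        show "\<forall>j. (2 * q + 1) * q ^ j mod (q ^ m - 1) \<le> 2 * q + 1"
          by (rule mx_all) (use Nbig d2 q3 in auto)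
      qed
      show "q ^ m - 1 - 3 * q \<in> odd_coset_leaders q (q ^ m - 1)"
      proof (rule num_good[OF q3 oq m1])
        show "0 < 3 * q" "odd (3 * q)" using q3 oq by auto
        show "3 * q < q ^ m - 1" using Nbig by simp
        show "\<forall>j. 3 * q * q ^ j mod (q ^ m - 1) \<le> 3 * q"
          by (rule mx_all) (use Nbig d3 q3 in auto)
      qed
      show "card (cyc_coset q (q ^ m - 1) (q ^ m - 1 - 3 * q)) = m"
      proof (rule num_card[OF q3 m1])
        show "0 < 3 * q" "3 * q < q ^ m - 1" using q3 Nbig by auto
        fix j assume "0 < j" "j < m"
        then have "j = 1" using m2 by simp
        then show "3 * q * q ^ j mod (q ^ m - 1) < 3 * q" using rot1[of "3 * q"] Nbig d3 q3 by simp
      qed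
      fix y assume y: "0 < y" "y < q ^ m - 1" "odd y" "\<forall>j. y * q ^ j mod (q ^ m - 1) \<le> y" "y < 3 * q"
      have pr: "y * q ^ (m - 1 - 0) mod (q ^ m - 1) \<le> y" using y(4) by blast
      have "0 < m" using m2 by simp
      have dle: "y div q ^ 0 mod q \<le> y div q ^ (m - 1)"
        by (rule digit_top[OF q2 y(2) \<open>0 < m\<close> pr])
      then have dc: "y mod q \<le> y div q" using m2 by simp
      have yd: "y = (y div q) * q + y mod q" by simp
      have c3: "y div q < 3" using y(5) q3 by (simp add: div_less_iff_less_mult)
      have "y div q = 0 \<or> y div q = 1 \<or> y div q = 2" using c3 by auto
      then show "y = q ^ (m - 1) \<or> y = 2 * q + 1"
      proof (elim disjE)
        assume "y div q = 0"
        then show ?thesis using dc yd y(1) by simp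
      next
        assume c: "y div q = 1"
        then have "y mod q \<le> 1" using dc by simp
        moreover have "y = q + y mod q" using yd c by simp
        ultimately have "y = q \<or> y = q + 1" by auto
        then show ?thesis using y(3) oq m2 by auto
      next
        assume c: "y div q = 2"
        then have "y mod q \<le> 2" using dc by simp
        moreover have "y = 2 * q + y mod q" using yd c by simp
        ultimately have "y = 2 * q \<or> y = 2 * q + 1 \<or> y = 2 * q + 2" by auto
        then show ?thesis using y(3) by auto
      qed
    qed
    then show ?thesis .
  qed
qed

lemma formula_eq: fixes q m A B :: nat assumes "m \<ge> 1"
  shows "(q - 1) * q ^ (m - 1) - A - B - 1 = q ^ m - 1 - (q ^ (m - 1) + A + B)"
proof -
  have "q ^ m = q * q ^ (m - 1)" using assms by (cases m) auto
  then have "(q - 1) * q ^ (m - 1) = q ^ m - q ^ (m - 1)" by (simp add: diff_mult_distrib)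
  then show ?thesis by simp
qed

theorem lemma20:
  fixes q m :: nat
  assumes "\<exists>p k. prime p \<and> k \<ge> 1 \<and> q = p ^ k"
    and "odd q" and "q \<ge> 3"
    and "m \<ge> 2" and "q ^ m \<ge> 25"
  shows "card (odd_coset_leaders q (q ^ m - 1)) \<ge> 3
    \<and> kth_largest 3 (odd_coset_leaders q (q ^ m - 1)) =
      (if \<not> 3 dvd (m + 1)
       then (q - 1) * q ^ (m - 1) - q ^ ((2 * m + 1) div 3) - q ^ (m div 3 - 1) - 1
       else (q - 1) * q ^ (m - 1) - q ^ ((2 * m - 1) div 3) - q ^ ((m + 1) div 3) - 1)
    \<and> card (cyc_coset q (q ^ m - 1) (kth_largest 3 (odd_coset_leaders q (q ^ m - 1)))) = m"
proof -
  have oq: "odd q" and q3: "q \<ge> 3" and m2: "m \<ge> 2" and big: "q ^ m \<ge> 25" using assms by auto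
  have m1: "m \<ge> 1" using m2 by simp
  show ?thesis
  proof (cases "m = 2")
    case True
    have q5: "q \<ge> 5"
    proof (rule ccontr)
      assume "\<not> q \<ge> 5"
      then have "q \<le> 4" by simp
      then have "q * q \<le> 4 * 4" by (intro mult_mono) auto
      then show False using big True by (simp add: power2_eq_square)
    qed
    have e: "(if \<not> 3 dvd (m + 1)
       then (q - 1) * q ^ (m - 1) - q ^ ((2 * m + 1) div 3) - q ^ (m div 3 - 1) - 1
       else (q - 1) * q ^ (m - 1) - q ^ ((2 * m - 1) div 3) - q ^ ((m + 1) div 3) - 1) = q ^ m - 1 - 3 * q"
      using True formula_eq[OF m1, of q "q" "q"] by simp
    show ?thesis unfolding e using case_m2[OF q5 oq True] .
  next
    case False
    then have m3: "m \<ge> 3" using m2 by simp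
    consider (r0) "m mod 3 = 0" | (r1) "m mod 3 = 1" | (r2) "m mod 3 = 2" by arith
    then show ?thesis
    proof cases
      case r0
      define j where "j = m div 3"
      have mj: "m = 3 * j" "j \<ge> 1" using r0 m3 unfolding j_def by presburger+
      have e: "(if \<not> 3 dvd (m + 1)
         then (q - 1) * q ^ (m - 1) - q ^ ((2 * m + 1) div 3) - q ^ (m div 3 - 1) - 1
         else (q - 1) * q ^ (m - 1) - q ^ ((2 * m - 1) div 3) - q ^ ((m + 1) div 3) - 1)
         = q ^ m - 1 - (q ^ (m - 1) + q ^ (2 * j) + q ^ (j - 1))"
      proof -
        have "\<not> 3 dvd (m + 1)" using mj by presburger
        moreover have "(2 * m + 1) div 3 = 2 * j" "m div 3 - 1 = j - 1" using mj by auto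
        ultimately show ?thesis using formula_eq[OF m1] by simp
      qed
      show ?thesis unfolding e using case0[OF q3 oq mj] .
    next
      case r1
      define j where "j = m div 3"
      have mj: "m = 3 * j + 1" "j \<ge> 1" using r1 m3 unfolding j_def by presburger+
      have e: "(if \<not> 3 dvd (m + 1)
         then (q - 1) * q ^ (m - 1) - q ^ ((2 * m + 1) div 3) - q ^ (m div 3 - 1) - 1
         else (q - 1) * q ^ (m - 1) - q ^ ((2 * m - 1) div 3) - q ^ ((m + 1) div 3) - 1)
         = q ^ m - 1 - (q ^ (m - 1) + q ^ (2 * j + 1) + q ^ (j - 1))"
      proof -
        have "\<not> 3 dvd (m + 1)" using mj by presburger
        moreover have "(2 * m + 1) div 3 = 2 * j + 1" "m div 3 - 1 = j - 1" using mj by auto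
        ultimately show ?thesis using formula_eq[OF m1] by simp
      qed
      show ?thesis unfolding e using case1[OF q3 oq mj] .
    next
      case r2
      define j where "j = m div 3"
      have mj: "m = 3 * j + 2" "j \<ge> 1" using r2 m3 unfolding j_def by presburger+
      have e: "(if \<not> 3 dvd (m + 1)
         then (q - 1) * q ^ (m - 1) - q ^ ((2 * m + 1) div 3) - q ^ (m div 3 - 1) - 1
         else (q - 1) * q ^ (m - 1) - q ^ ((2 * m - 1) div 3) - q ^ ((m + 1) div 3) - 1)
         = q ^ m - 1 - (q ^ (m - 1) + q ^ (2 * j + 1) + q ^ (j + 1))"
      proof -
        have "3 dvd (m + 1)" using mj by presburger
        moreover have "(2 * m - 1) div 3 = 2 * j + 1" "(m + 1) div 3 = j + 1" using mj by auto
        ultimately show ?thesis using formula_eq[OF m1] by simp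
      qed
      show ?thesis unfolding e using case2[OF q3 oq mj] .
    qed
  qed
qed

end
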